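(* Let $(\mathcal A,\varphi,\mathcal F,\Phi)$ be a ncps of type B$'$ with associated infinitesimal ncps $(\mathcal B,\varphi,\varphi')$, let $q\in\mathcal F$ with $q^2=q$, $\Phi(q)=1$ and $(\mathcal A,\{q\})$ cyclic-antimonotone independent, and let $p:=1_{\mathcal B}-q$. Consider the algebra $p\mathcal Bp$ with unit $p$ and the functionals $\psi:=\varphi|_{p\mathcal Bp}$, $\psi':=(\varphi+\varphi')|_{p\mathcal Bp}$. If $(\mathcal A_i)_{i\in I}$ are free subalgebras (containing $1_{\mathcal A}$) in $(\mathcal A,\varphi)$, then $(p\mathcal A_ip)_{i\in I}$ are infinitesimally free in $(p\mathcal Bp,\psi,\psi')$.
   Context: Ncps of type B$'$ $(\mathcal A,\varphi,\mathcal F,\Phi)$: $\mathcal A$ unital complex algebra, $\varphi(1_{\mathcal A})=1$, $\mathcal F$ an algebra which is an $\mathcal A$-bimodule compatible with its multiplication, $\Phi:\mathcal F\to\mathbb C$ linear. $\mathcal B=\mathcal A\oplus\mathcal F$ with product $(a_1,f_1)(a_2,f_2)=(a_1a_2,a_1f_2+f_1a_2+f_1f_2)$, unit $1_{\mathcal A}$; $\varphi(a+f):=\varphi(a)$, $\varphi'(a+f):=\Phi(f)$. Cyclic-antimonotone independence of $(\mathcal A,\{q\})$: $\Phi(a_0qa_1\cdots a_{n-1}qa_n)=\varphi(a_0a_n)\prod_{i=1}^{n-1}\varphi(a_i)\Phi(q^n)$ for $a_l\in\mathcal A$. One has $\psi(p)=1$, $\psi'(p)=0$, so $(p\mathcal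 Bp,\psi,\psi')$ is an infinitesimal ncps. $p\mathcal A_ip=\{pap:a\in\mathcal A_i\}$; infinitesimal freeness of these sets means infinitesimal freeness of the subalgebras of $p\mathcal Bp$ they generate together with $p$. Infinitesimal freeness of unital subalgebras $(\mathcal C_i)$ in $(\mathcal C,\psi,\psi')$: for $i_1\ne\cdots\ne i_n$ and $c_l\in\mathcal C_{i_l}$ with $\psi(c_l)=0$, $\psi(c_1\cdots c_n)=0$ and $\psi'(c_1\cdots c_n)=\psi(c_1c_n)\psi(c_2c_{n-1})\cdots\psi(c_{(n-1)/2}c_{(n+3)/2})\psi'(c_{(n+1)/2})$ if $n$ is odd and $i_1=i_n,i_2=i_{n-1},\dots$, and $0$ otherwise. Freeness of $(\mathcal A_i)$: $\varphi(a_1\cdots a_n)=0$ for alternating indices and centered $a_l\in\mathcal A_{i_l}$. *)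

theory Defs
  imports Complex_Main
begin

definition cplx_alg :: "(complex \<Rightarrow> 'a::ring \<Rightarrow> 'a) \<Rightarrow> bool" where
  "cplx_alg s \<longleftrightarrow> module s \<and>
     (\<forall>c x y. s c (x * y) = s c x * y \<and> s c (x * y) = x * s c y)"

text \<open>F is an A-bimodule (left action lm, right action rm), complex-bilinear, unital
  (so that 1_A is the unit of B), and compatible with the multiplication of F.\<close>
definition bimod_compat ::
  "(complex \<Rightarrow> 'a::ring_1 \<Rightarrow> 'a) \<Rightarrow> (complex \<Rightarrow> 'f::ring \<Rightarrow> 'f) \<Rightarrow>
   ('a \<Rightarrow> 'f \<Rightarrow> 'f) \<Rightarrow> ('f \<Rightarrow> 'a \<Rightarrow> 'f) \<Rightarrow> bool" where
  "bimod_compat sA sF lm rm \<longleftrightarrow>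
     (\<forall>a b f g c.
        lm (a + b) f = lm a f + lm b f \<and> lm a (f + g) = lm a f + lm a g \<and>
        rm f (a + b) = rm f a + rm f b \<and> rm (f + g) a = rm f a + rm g a \<and>
        lm (sA c a) f = sF c (lm a f) \<and> lm a (sF c f) = sF c (lm a f) \<and>
        rm f (sA c a) = sF c (rm f a) \<and> rm (sF c f) a = sF c (rm f a) \<and>
        lm (a * b) f = lm a (lm b f) \<and> lm 1 f = f \<and>
        rm f (a * b) = rm (rm f a) b \<and> rm f 1 = f \<and>
        rm (lm a f) b = lm a (rm f b) \<and>
        lm a (f * g) = lm a f * g \<and> rm (f * g) a = f * rm g a \<and>
        rm f a * g = f * lm a g)"

definition ncps_typeB' ::
  "(complex \<Rightarrow> 'a::ring_1 \<Rightarrow> 'a) \<Rightarrow> ('a \<Rightarrow> complex) \<Rightarrow>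
   (complex \<Rightarrow> 'f::ring \<Rightarrow> 'f) \<Rightarrow> ('a \<Rightarrow> 'f \<Rightarrow> 'f) \<Rightarrow> ('f \<Rightarrow> 'a \<Rightarrow> 'f) \<Rightarrow>
   ('f \<Rightarrow> complex) \<Rightarrow> bool" where
  "ncps_typeB' sA \<phi> sF lm rm \<Phi> \<longleftrightarrow>
     cplx_alg sA \<and> cplx_alg sF \<and> bimod_compat sA sF lm rm \<and>
     module_hom sA (*) \<phi> \<and> \<phi> 1 = 1 \<and> module_hom sF (*) \<Phi>"

definition bplus :: "'a::ring_1 \<times> 'f::ring \<Rightarrow> 'a \<times> 'f \<Rightarrow> 'a \<times> 'f" where
  "bplus x y = (fst x + fst y, snd x + snd y)"

definition bscale :: "(complex \<Rightarrow> 'a \<Rightarrow> 'a) \<Rightarrow> (complex \<Rightarrow> 'f \<Rightarrow> 'f) \<Rightarrow>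
    complex \<Rightarrow> 'a \<times> 'f \<Rightarrow> 'a \<times> 'f" where
  "bscale sA sF c x = (sA c (fst x), sF c (snd x))"

definition bmult :: "('a::ring_1 \<Rightarrow> 'f::ring \<Rightarrow> 'f) \<Rightarrow> ('f \<Rightarrow> 'a \<Rightarrow> 'f) \<Rightarrow>
    'a \<times> 'f \<Rightarrow> 'a \<times> 'f \<Rightarrow> 'a \<times> 'f" where
  "bmult lm rm x y =
     (fst x * fst y, lm (fst x) (snd y) + rm (snd x) (fst y) + snd x * snd y)"

definition mprod :: "('c \<Rightarrow> 'c \<Rightarrow> 'c) \<Rightarrow> 'c \<Rightarrow> 'c list \<Rightarrow> 'c" where
  "mprod mult one cs = foldr mult cs one"

fun fpow :: "nat \<Rightarrow> 'f::ring \<Rightarrow> 'f" where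
  "fpow 0 f = 0"
| "fpow (Suc 0) f = f"
| "fpow (Suc (Suc n)) f = f * fpow (Suc n) f"

text \<open>The word a_0 q a_1 q ... q a_n in B, for a nonempty list [a_0,...,a_n].\<close>
fun qword :: "('a::ring_1 \<Rightarrow> 'f::ring \<Rightarrow> 'f) \<Rightarrow> ('f \<Rightarrow> 'a \<Rightarrow> 'f) \<Rightarrow> 'f \<Rightarrow>
    'a list \<Rightarrow> 'a \<times> 'f" where
  "qword lm rm q [] = (1, 0)"
| "qword lm rm q [a] = (a, 0)"
| "qword lm rm q (a # b # as) =
     bmult lm rm (a, 0) (bmult lm rm (0, q) (qword lm rm q (b # as)))"

text \<open>Cyclic-antimonotone independence of (A, {q}):
  Phi(a_0 q a_1 ... a_{n-1} q a_n) = phi(a_0 a_n) prod_{i=1}^{n-1} phi(a_i) Phi(q^n), n \<ge> 1.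
  Note the word lies in F, so Phi is applied to its F-component (i.e. phi' of it).\<close>
definition cyc_antimon_indep ::
  "('a::ring_1 \<Rightarrow> complex) \<Rightarrow> ('a \<Rightarrow> 'f::ring \<Rightarrow> 'f) \<Rightarrow> ('f \<Rightarrow> 'a \<Rightarrow> 'f) \<Rightarrow>
   ('f \<Rightarrow> complex) \<Rightarrow> 'f \<Rightarrow> bool" where
  "cyc_antimon_indep \<phi> lm rm \<Phi> q \<longleftrightarrow>
     (\<forall>as. length as \<ge> 2 \<longrightarrow>
        (let n = length as - 1 in
         \<Phi> (snd (qword lm rm q as)) =
           \<phi> (as ! 0 * as ! n) * (\<Prod>i\<in>{1..<n}. \<phi> (as ! i)) * \<Phi> (fpow n q)))"

definition unital_subalg :: "(complex \<Rightarrow> 'a::ring_1 \<Rightarrow> 'a) \<Rightarrow> 'a set \<Rightarrow> bool" where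
  "unital_subalg sA S \<longleftrightarrow> 1 \<in> S \<and>
     (\<forall>x\<in>S. \<forall>y\<in>S. x + y \<in> S \<and> x * y \<in> S) \<and> (\<forall>c. \<forall>x\<in>S. sA c x \<in> S)"

definition free_family :: "('a::ring_1 \<Rightarrow> complex) \<Rightarrow> 'i set \<Rightarrow> ('i \<Rightarrow> 'a set) \<Rightarrow> bool" where
  "free_family \<phi> I A \<longleftrightarrow>
     (\<forall>is as. is \<noteq> [] \<and> length as = length is \<and> set is \<subseteq> I \<and> successively (\<noteq>) is \<and>
        (\<forall>k<length is. as ! k \<in> A (is ! k) \<and> \<phi> (as ! k) = 0) \<longrightarrow>
        \<phi> (prod_list as) = 0)"

inductive_set gen_alg :: "('c \<Rightarrow> 'c \<Rightarrow> 'c) \<Rightarrow> (complex \<Rightarrow> 'c \<Rightarrow> 'c) \<Rightarrow>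
    ('c \<Rightarrow> 'c \<Rightarrow> 'c) \<Rightarrow> 'c \<Rightarrow> 'c set \<Rightarrow> 'c set"
  for add scale mult one S where
  gen: "x \<in> S \<Longrightarrow> x \<in> gen_alg add scale mult one S"
| unit: "one \<in> gen_alg add scale mult one S"
| add: "x \<in> gen_alg add scale mult one S \<Longrightarrow> y \<in> gen_alg add scale mult one S \<Longrightarrow>
          add x y \<in> gen_alg add scale mult one S"
| scale: "x \<in> gen_alg add scale mult one S \<Longrightarrow> scale c x \<in> gen_alg add scale mult one S"
| mult: "x \<in> gen_alg add scale mult one S \<Longrightarrow> y \<in> gen_alg add scale mult one S \<Longrightarrow>
          mult x y \<in> gen_alg add scale mult one S"

text \<open>Infinitesimal freeness of the unital subalgebras (C_i)_{i \<in> I} in (C, psi, psi'),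
  where C has multiplication mult and unit one.  Lists are 0-indexed: c_{l} is cs!(l-1).\<close>
definition inf_free :: "('c \<Rightarrow> 'c \<Rightarrow> 'c) \<Rightarrow> 'c \<Rightarrow> ('c \<Rightarrow> complex) \<Rightarrow> ('c \<Rightarrow> complex) \<Rightarrow>
    'i set \<Rightarrow> ('i \<Rightarrow> 'c set) \<Rightarrow> bool" where
  "inf_free mult one \<psi> \<psi>' I C \<longleftrightarrow>
     (\<forall>is cs. is \<noteq> [] \<and> length cs = length is \<and> set is \<subseteq> I \<and> successively (\<noteq>) is \<and>
        (\<forall>k<length is. cs ! k \<in> C (is ! k) \<and> \<psi> (cs ! k) = 0) \<longrightarrow>
        \<psi> (mprod mult one cs) = 0 \<and>
        \<psi>' (mprod mult one cs) =
          (let n = length cs in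
           if odd n \<and> (\<forall>k<n. is ! k = is ! (n - 1 - k))
           then (\<Prod>k<n div 2. \<psi> (mult (cs ! k) (cs ! (n - 1 - k)))) * \<psi>' (cs ! (n div 2))
           else 0))"

end

theory Submission
  imports Defs
begin

definition sT :: "('a \<times> 'a) list \<Rightarrow> ('a \<Rightarrow> 'a \<Rightarrow> 'c::comm_monoid_add) \<Rightarrow> 'c" where
  "sT T f = sum_list (map (\<lambda>(b, e). f b e) T)"

lemma sT_Nil[simp]: "sT [] f = 0" by (simp add: sT_def)
lemma sT_Cons[simp]: "sT ((b, e) # T) f = f b e + sT T f" by (simp add: sT_def)
lemma sT_append[simp]: "sT (T1 @ T2) f = sT T1 f + sT T2 f" by (simp add: sT_def)
lemma sT_add: "sT T (\<lambda>b e. f b e + g b e) = sT T f + sT T g"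
  by (induction T) (auto simp: algebra_simps)
lemma sT_diff: "sT T (\<lambda>b e. (f b e :: 'c::ab_group_add) - g b e) = sT T f - sT T g"
  by (induction T) (auto simp: algebra_simps)
lemma sT_neg: "sT T (\<lambda>b e. - (f b e :: 'c::ab_group_add)) = - sT T f"
  by (induction T) (auto simp: algebra_simps)
lemma sT_cmult: "sT T (\<lambda>b e. (c :: 'c::comm_semiring_1) * f b e) = c * sT T f"
  by (induction T) (auto simp: algebra_simps)
lemma sT_multc: "sT T (\<lambda>b e. f b e * (c :: 'c::comm_semiring_1)) = sT T f * c"
  by (induction T) (auto simp: algebra_simps)
lemma sT_zero[simp]: "sT T (\<lambda>b e. 0) = 0" by (induction T) auto
lemma sT_swap: "sT T1 (\<lambda>b e. sT T2 (\<lambda>b' e'. f b e b' e')) = sT T2 (\<lambda>b' e'. sT T1 (\<lambda>b e. f b e b' e'))"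
  by (induction T1) (auto simp: sT_add)
lemma sT_cong: "(\<And>b e. (b, e) \<in> set T \<Longrightarrow> f b e = g b e) \<Longrightarrow> sT T f = sT T g"
  by (induction T) auto
lemma sT_map: "sT (map (\<lambda>(b, e). (h b e, k b e)) T) f = sT T (\<lambda>b e. f (h b e) (k b e))"
  by (induction T) auto
lemma sT_concat: "sT (concat (map (\<lambda>(b, e). map (\<lambda>(b', e'). (h b e b' e', k b e b' e')) T2) T1)) f
   = sT T1 (\<lambda>b e. sT T2 (\<lambda>b' e'. f (h b e b' e') (k b e b' e')))"
  by (induction T1) (auto simp: sT_def o_def split_def)

locale Bset =
  fixes sA :: "complex \<Rightarrow> 'a::ring_1 \<Rightarrow> 'a" and \<phi> :: "'a \<Rightarrow> complex"
    and sF :: "complex \<Rightarrow> 'f::ring \<Rightarrow> 'f"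
    and lm :: "'a \<Rightarrow> 'f \<Rightarrow> 'f" and rm :: "'f \<Rightarrow> 'a \<Rightarrow> 'f"
    and \<Phi> :: "'f \<Rightarrow> complex" and q :: 'f
  assumes ncps: "ncps_typeB' sA \<phi> sF lm rm \<Phi>"
    and q_idem: "q * q = q"
    and q_norm: "\<Phi> q = 1"
    and q_cai: "cyc_antimon_indep \<phi> lm rm \<Phi> q"
begin

lemma mA: "module sA" and mF: "module sF"
  using ncps unfolding ncps_typeB'_def cplx_alg_def by auto

lemma hphi: "module_hom sA (*) \<phi>" and hPhi: "module_hom sF (*) \<Phi>"
  using ncps unfolding ncps_typeB'_def by auto

lemma phi_one[simp]: "\<phi> 1 = 1" using ncps unfolding ncps_typeB'_def by auto

lemma bim: "bimod_compat sA sF lm rm" using ncps unfolding ncps_typeB'_def by auto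

lemma sA_m1[simp]: "sA c x * y = sA c (x * y)" and sA_m2[simp]: "x * sA c y = sA c (x * y)"
  using ncps unfolding ncps_typeB'_def cplx_alg_def by metis+
lemma sF_m1[simp]: "sF c x * y = sF c (x * y)" and sF_m2[simp]: "x * sF c y = sF c (x * y)"
  using ncps unfolding ncps_typeB'_def cplx_alg_def by metis+

lemma sA_add[simp]: "sA c (x + y) = sA c x + sA c y" using module.scale_right_distrib[OF mA] by blast
lemma sA_zero[simp]: "sA c 0 = 0" using module.scale_zero_right[OF mA] by blast
lemma sA_minus[simp]: "sA c (- x) = - sA c x" using module.scale_minus_right[OF mA] by blast
lemma sA_scale[simp]: "sA c (sA d x) = sA (c*d) x" using module.scale_scale[OF mA] by blast
lemma sA_one[simp]: "sA 1 x = x" using module.scale_one[OF mA] by blast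
lemma sA_mone[simp]: "sA (-1) x = - x" using module.scale_minus_left[OF mA] module.scale_one[OF mA] by metis
lemma sA_negc[simp]: "sA (- c) x = - sA c x" using module.scale_minus_left[OF mA] by blast
lemma sA_zl[simp]: "sA 0 x = 0" using module.scale_zero_left[OF mA] by blast
lemma sF_add[simp]: "sF c (x + y) = sF c x + sF c y" using module.scale_right_distrib[OF mF] by blast
lemma sF_zero[simp]: "sF c 0 = 0" using module.scale_zero_right[OF mF] by blast
lemma sF_minus[simp]: "sF c (- x) = - sF c x" using module.scale_minus_right[OF mF] by blast
lemma sF_scale[simp]: "sF c (sF d x) = sF (c*d) x" using module.scale_scale[OF mF] by blast
lemma sF_one[simp]: "sF 1 x = x" using module.scale_one[OF mF] by blast
lemma sF_mone[simp]: "sF (-1) x = - x" using module.scale_minus_left[OF mF] module.scale_one[OF mF] by metis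
lemma sF_zl[simp]: "sF 0 x = 0" using module.scale_zero_left[OF mF] by blast

lemma phi_add[simp]: "\<phi> (x + y) = \<phi> x + \<phi> y" using module_hom.add[OF hphi] by blast
lemma phi_scale[simp]: "\<phi> (sA c x) = c * \<phi> x" using module_hom.scale[OF hphi] by blast
lemma phi_zero[simp]: "\<phi> 0 = 0" using module_hom.zero[OF hphi] by blast
lemma phi_minus[simp]: "\<phi> (- x) = - \<phi> x" using module_hom.neg[OF hphi] by blast
lemma phi_diff[simp]: "\<phi> (x - y) = \<phi> x - \<phi> y" using module_hom.diff[OF hphi] by blast
lemma Phi_add[simp]: "\<Phi> (x + y) = \<Phi> x + \<Phi> y" using module_hom.add[OF hPhi] by blast
lemma Phi_scale[simp]: "\<Phi> (sF c x) = c * \<Phi> x" using module_hom.scale[OF hPhi] by blast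
lemma Phi_zero[simp]: "\<Phi> 0 = 0" using module_hom.zero[OF hPhi] by blast
lemma Phi_minus[simp]: "\<Phi> (- x) = - \<Phi> x" using module_hom.neg[OF hPhi] by blast

lemma lm_add1[simp]: "lm (a + b) f = lm a f + lm b f"
  and lm_add2[simp]: "lm a (f + g) = lm a f + lm a g"
  and rm_add1[simp]: "rm f (a + b) = rm f a + rm f b"
  and rm_add2[simp]: "rm (f + g) a = rm f a + rm g a"
  and lm_sA[simp]: "lm (sA c a) f = sF c (lm a f)"
  and lm_sF[simp]: "lm a (sF c f) = sF c (lm a f)"
  and rm_sA[simp]: "rm f (sA c a) = sF c (rm f a)"
  and rm_sF[simp]: "rm (sF c f) a = sF c (rm f a)"
  and lm_mult[simp]: "lm (a * b) f = lm a (lm b f)"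
  and lm_one[simp]: "lm 1 f = f"
  and rm_mult[simp]: "rm f (a * b) = rm (rm f a) b"
  and rm_one[simp]: "rm f 1 = f"
  and rm_lm[simp]: "rm (lm a f) b = lm a (rm f b)"
  and lm_fm[simp]: "lm a (f * g) = lm a f * g"
  and rm_fm[simp]: "rm (f * g) a = f * rm g a"
  and rm_swap[simp]: "rm f a * g = f * lm a g"
  using bim unfolding bimod_compat_def by blast+

lemma lm_z1[simp]: "lm 0 f = 0" using lm_add1[of 0 0 f] by simp
lemma lm_z2[simp]: "lm a 0 = 0" using lm_add2[of a 0 0] by simp
lemma rm_z1[simp]: "rm 0 a = 0" using rm_add2[of 0 0 a] by simp
lemma rm_z2[simp]: "rm f 0 = 0" using rm_add1[of f 0 0] by simp
lemma lm_m1[simp]: "lm (- a) f = - lm a f"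
proof - have "lm a f + lm (- a) f = 0" using lm_add1[of a "-a" f] by simp thus ?thesis by (simp add: add_eq_0_iff) qed
lemma lm_m2[simp]: "lm a (- f) = - lm a f"
proof - have "lm a f + lm a (- f) = 0" using lm_add2[of a f "-f"] by simp thus ?thesis by (simp add: add_eq_0_iff) qed
lemma rm_m1[simp]: "rm f (- a) = - rm f a"
proof - have "rm f a + rm f (- a) = 0" using rm_add1[of f a "-a"] by simp thus ?thesis by (simp add: add_eq_0_iff) qed
lemma rm_m2[simp]: "rm (- f) a = - rm f a"
proof - have "rm f a + rm (- f) a = 0" using rm_add2[of f "-f" a] by simp thus ?thesis by (simp add: add_eq_0_iff) qed

abbreviation "bm \<equiv> bmult lm rm"
abbreviation "qw \<equiv> qword lm rm q"
abbreviation "bsc \<equiv> bscale sA sF"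

definition Psi :: "'a \<times> 'f \<Rightarrow> complex" where "Psi x = \<phi> (fst x) + \<Phi> (snd x)"

lemma bm_pair[simp]: "bm (a, f) (b, g) = (a * b, lm a g + rm f b + f * g)"
  by (simp add: bmult_def)
lemma bplus_pair[simp]: "bplus (a, f) (b, g) = (a + b, f + g)" by (simp add: bplus_def)
lemma bsc_pair[simp]: "bsc c (a, f) = (sA c a, sF c f)" by (simp add: bscale_def)

lemma bm_assoc: "bm (bm x y) z = bm x (bm y z)"
  by (cases x; cases y; cases z) (simp add: algebra_simps)

lemma bm_distL: "bm (bplus x y) z = bplus (bm x z) (bm y z)"
  by (cases x; cases y; cases z) (simp add: algebra_simps)
lemma bm_distR: "bm x (bplus y z) = bplus (bm x y) (bm x z)"
  by (cases x; cases y; cases z) (simp add: algebra_simps)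
lemma bm_scL: "bm (bsc c x) y = bsc c (bm x y)"
  by (cases x; cases y) (simp add: algebra_simps)
lemma bm_scR: "bm x (bsc c y) = bsc c (bm x y)"
  by (cases x; cases y) (simp add: algebra_simps)
lemma bm_0L[simp]: "bm (0, 0) x = (0, 0)" by (cases x) simp
lemma bm_0R[simp]: "bm x (0, 0) = (0, 0)" by (cases x) simp
lemma bm_1L[simp]: "bm (1, 0) x = x" by (cases x) simp
lemma bm_1R[simp]: "bm x (1, 0) = x" by (cases x) simp

lemma Psi_plus: "Psi (bplus x y) = Psi x + Psi y"
  by (cases x; cases y) (simp add: Psi_def)
lemma Psi_sc: "Psi (bsc c x) = c * Psi x"
  by (cases x) (simp add: Psi_def algebra_simps)
lemma Psi_0[simp]: "Psi (0, 0) = 0" by (simp add: Psi_def)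


lemma qw2: "qw [b, e] = (0, lm b (rm q e))" by simp

lemma qw_Cons: "zs \<noteq> [] \<Longrightarrow> qw (a # zs) = bm (a, 0) (bm (0, q) (qw zs))"
  by (cases zs) auto

lemma fst_qw: assumes "length zs \<ge> 2" shows "fst (qw zs) = 0"
proof -
  obtain a b r where "zs = a # b # r" using assms by (cases zs; cases "tl zs") auto
  thus ?thesis by (cases "qw (b # r)") simp
qed

lemma qw_mult: "bm (qw (as @ [x])) (qw (y # bs)) = qw (as @ [x * y] @ bs)"
proof (induction as)
  case Nil
  then show ?case
  proof (cases bs)
    case Nil then show ?thesis by simp
  next
    case (Cons b bs')
    have "bm (x, 0) (bm (y, 0) (bm (0, q) (qw (b # bs')))) = bm (bm (x, 0) (y, 0)) (bm (0, q) (qw (b # bs')))"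
      by (simp only: bm_assoc)
    then show ?thesis using Cons by simp
  qed
next
  case (Cons a as)
  have "bm (qw (a # as @ [x])) (qw (y # bs)) = bm (bm (a, 0) (bm (0, q) (qw (as @ [x])))) (qw (y # bs))"
    by (simp add: qw_Cons)
  also have "\<dots> = bm (a, 0) (bm (0, q) (bm (qw (as @ [x])) (qw (y # bs))))"
    by (simp only: bm_assoc)
  also have "\<dots> = qw (a # as @ [x * y] @ bs)"
    using Cons.IH by (simp add: qw_Cons)
  finally show ?case by simp
qed

definition merge :: "'a list \<Rightarrow> 'a list \<Rightarrow> 'a list" where
  "merge as bs = butlast as @ [last as * hd bs] @ tl bs"

declare qword.simps(3)[simp del]

lemma qw_merge: "as \<noteq> [] \<Longrightarrow> bs \<noteq> [] \<Longrightarrow> bm (qw as) (qw bs) = qw (merge as bs)"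
  using qw_mult[of "butlast as" "last as" "hd bs" "tl bs"] by (simp add: merge_def)

lemma merge_ne: "merge as bs \<noteq> []" by (simp add: merge_def)

fun G :: "'a list \<Rightarrow> complex" where
  "G [] = 1"
| "G [a] = \<phi> a"
| "G (a # b # rest) = \<phi> (a * last (b # rest)) * prod_list (map \<phi> (butlast (b # rest)))"

lemma fpow_q: "n \<ge> 1 \<Longrightarrow> fpow n q = q"
proof (induction n)
  case 0 then show ?case by simp
next
  case (Suc n) then show ?case using q_idem by (cases n) auto
qed

lemma prod_list_nth: "prod_list (map f xs) = (\<Prod>i<length xs. f (xs ! i))"
proof (induction xs)
  case Nil then show ?case by simp
next
  case (Cons x xs) then show ?case by (simp add: prod.lessThan_Suc_shift del: prod.lessThan_Suc)
qed

lemma Psi_qw: "xs \<noteq> [] \<Longrightarrow> Psi (qw xs) = G xs"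
proof (cases xs rule: G.cases)
  case (3 a b rest)
  define n where "n = length xs - 1"
  have n: "n = Suc (length rest)" using 3 by (simp add: n_def)
  have len: "length xs \<ge> 2" using 3 by simp
  have "\<Phi> (snd (qw xs)) = \<phi> (xs ! 0 * xs ! n) * (\<Prod>i\<in>{1..<n}. \<phi> (xs ! i)) * \<Phi> (fpow n q)"
    using q_cai len unfolding cyc_antimon_indep_def n_def Let_def by blast
  also have "\<Phi> (fpow n q) = 1" using n fpow_q q_norm by simp
  also have "xs ! n = last (b # rest)" using 3 n by (simp add: last_conv_nth)
  also have "(\<Prod>i\<in>{1..<n}. \<phi> (xs ! i)) = (\<Prod>i<length rest. \<phi> ((b # rest) ! i))"
    using 3 n prod.shift_bounds_Suc_ivl[of "\<lambda>i. \<phi> (xs ! i)" 0 "length rest"]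
    by (simp add: lessThan_atLeast0)
  also have "\<dots> = prod_list (map \<phi> (butlast (b # rest)))"
    unfolding prod_list_nth by (rule prod.cong) (auto simp: nth_butlast nth_Cons split: nat.split)
  finally show ?thesis using 3 len fst_qw[OF len] by (simp add: Psi_def)
qed (auto simp: Psi_def)

inductive_set Bw :: "('a \<times> 'f) set" where
  Bw0: "(0, 0) \<in> Bw"
| BwS: "x \<in> Bw \<Longrightarrow> as \<noteq> [] \<Longrightarrow> bplus (bsc c (qw as)) x \<in> Bw"

lemma bplus_assoc: "bplus (bplus x y) z = bplus x (bplus y z)"
  by (cases x; cases y; cases z) (simp add: algebra_simps)
lemma bplus_0[simp]: "bplus (0, 0) x = x" by (cases x) simp
lemma bsc_bplus: "bsc c (bplus x y) = bplus (bsc c x) (bsc c y)"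
  by (cases x; cases y) simp
lemma bsc_bsc: "bsc c (bsc d x) = bsc (c * d) x" by (cases x) simp
lemma bsc_0[simp]: "bsc c (0, 0) = (0, 0)" by simp
lemma bsc_1[simp]: "bsc 1 x = x" by (cases x) simp

lemma Bw_plus: "x \<in> Bw \<Longrightarrow> y \<in> Bw \<Longrightarrow> bplus x y \<in> Bw"
  by (induction x rule: Bw.induct) (auto simp: bplus_assoc intro: Bw.intros)

lemma Bw_sc: "x \<in> Bw \<Longrightarrow> bsc c x \<in> Bw"
  by (induction x rule: Bw.induct) (auto simp: bsc_bplus bsc_bsc intro: Bw.intros)

lemma Bw_qw: "as \<noteq> [] \<Longrightarrow> qw as \<in> Bw"
  using BwS[OF Bw0, of as 1] by (cases "qw as") simp

lemma Bw_multw: "y \<in> Bw \<Longrightarrow> as \<noteq> [] \<Longrightarrow> bm (qw as) y \<in> Bw"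
proof (induction y rule: Bw.induct)
  case Bw0 then show ?case by (simp add: Bw.Bw0)
next
  case (BwS x bs c)
  then show ?case
    by (auto simp: bm_distR bm_scR qw_merge merge_ne intro!: Bw.intros)
qed

lemma Bw_mult: "x \<in> Bw \<Longrightarrow> y \<in> Bw \<Longrightarrow> bm x y \<in> Bw"
proof (induction x rule: Bw.induct)
  case Bw0 then show ?case by (simp add: Bw.Bw0)
next
  case (BwS x as c)
  then show ?case
    by (auto simp: bm_distL bm_scL intro!: Bw_plus Bw_sc Bw_multw)
qed

lemma Bw_A: "(a, 0) \<in> Bw" using Bw_qw[of "[a]"] by simp

definition CT :: "'a \<times> 'f \<Rightarrow> 'a \<times> 'f \<Rightarrow> 'a \<times> 'f \<Rightarrow> complex" where
  "CT L x R = Psi (bm L (bm x R))"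

lemma CT_plusL: "CT (bplus L1 L2) x R = CT L1 x R + CT L2 x R"
  by (simp add: CT_def bm_distL Psi_plus)
lemma CT_scL: "CT (bsc c L) x R = c * CT L x R"
  by (simp add: CT_def bm_scL Psi_sc)
lemma CT_plusR: "CT L x (bplus R1 R2) = CT L x R1 + CT L x R2"
  by (simp add: CT_def bm_distR Psi_plus)
lemma CT_scR: "CT L x (bsc c R) = c * CT L x R"
  by (simp add: CT_def bm_scR Psi_sc)
lemma CT_plusM: "CT L (bplus x y) R = CT L x R + CT L y R"
  by (simp add: CT_def bm_distR bm_distL Psi_plus)
lemma CT_scM: "CT L (bsc c x) R = c * CT L x R"
  by (simp add: CT_def bm_scR bm_scL Psi_sc)
lemma CT_0L[simp]: "CT (0, 0) x R = 0" by (simp add: CT_def)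
lemma CT_0R[simp]: "CT L x (0, 0) = 0" by (simp add: CT_def)

lemma G_Cons: "ys \<noteq> [] \<Longrightarrow> G (a # ys) = \<phi> (a * last ys) * prod_list (map \<phi> (butlast ys))"
  by (cases ys) auto

lemma G_mid: "G (us @ [\<alpha>, m, \<beta>] @ vs) = \<phi> m * G (us @ [\<alpha>, \<beta>] @ vs)"
proof (cases us)
  case Nil
  then show ?thesis by (cases vs) (auto simp: butlast_append G_Cons del: G.simps)
next
  case (Cons u us')
  then show ?thesis by (cases vs) (auto simp: butlast_append G_Cons del: G.simps)
qed

lemma K_words: "as \<noteq> [] \<Longrightarrow> bs \<noteq> [] \<Longrightarrow>
   CT (qw as) (qw [b, m, e]) (qw bs) = \<phi> m * CT (qw as) (qw [b, e]) (qw bs)"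
proof -
  assume a: "as \<noteq> []" "bs \<noteq> []"
  have e1: "bm (qw [b, m, e]) (qw bs) = qw (merge [b, m, e] bs)"
    by (rule qw_merge) (use a in auto)
  have e2: "bm (qw as) (qw (merge [b, m, e] bs)) = qw (merge as (merge [b, m, e] bs))"
    by (rule qw_merge) (use a merge_ne in auto)
  have e3: "bm (qw [b, e]) (qw bs) = qw (merge [b, e] bs)"
    by (rule qw_merge) (use a in auto)
  have e4: "bm (qw as) (qw (merge [b, e] bs)) = qw (merge as (merge [b, e] bs))"
    by (rule qw_merge) (use a merge_ne in auto)
  have "CT (qw as) (qw [b, m, e]) (qw bs) = G (merge as (merge [b, m, e] bs))"
    unfolding CT_def e1 e2 by (rule Psi_qw[OF merge_ne])
  also have "merge as (merge [b, m, e] bs) = butlast as @ [last as * b, m, e * hd bs] @ tl bs"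
    by (simp add: merge_def)
  finally have 1: "CT (qw as) (qw [b, m, e]) (qw bs) = G (butlast as @ [last as * b, m, e * hd bs] @ tl bs)" .
  have "CT (qw as) (qw [b, e]) (qw bs) = G (merge as (merge [b, e] bs))"
    unfolding CT_def e3 e4 by (rule Psi_qw[OF merge_ne])
  also have "merge as (merge [b, e] bs) = butlast as @ [last as * b, e * hd bs] @ tl bs"
    by (simp add: merge_def)
  finally have 2: "CT (qw as) (qw [b, e]) (qw bs) = G (butlast as @ [last as * b, e * hd bs] @ tl bs)" .
  show ?thesis unfolding 1 2 by (rule G_mid)
qed

lemma K_lemma: "L \<in> Bw \<Longrightarrow> R \<in> Bw \<Longrightarrow> CT L (qw [b, m, e]) R = \<phi> m * CT L (qw [b, e]) R"
proof (induction L rule: Bw.induct)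
  case Bw0 then show ?case by simp
next
  case (BwS x as c)
  have "CT (qw as) (qw [b, m, e]) R = \<phi> m * CT (qw as) (qw [b, e]) R"
    using BwS(4)
  proof (induction R rule: Bw.induct)
    case Bw0 then show ?case by simp
  next
    case (BwS y bs d)
    then show ?case using K_words[OF \<open>as \<noteq> []\<close> BwS(2)] by (simp add: CT_plusR CT_scR algebra_simps)
  qed
  then show ?case using BwS by (simp add: CT_plusL CT_scL algebra_simps)
qed


definition prodT :: "'a \<Rightarrow> ('a \<times> 'a) list \<Rightarrow> 'a \<Rightarrow> ('a \<times> 'a) list \<Rightarrow> ('a \<times> 'a) list" where
  "prodT y1 T1 y2 T2 = map (\<lambda>(b, e). (b, e * y2)) T1 @ map (\<lambda>(b, e). (y1 * b, e)) T2 @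
     concat (map (\<lambda>(b, e). map (\<lambda>(b', e'). (sA (\<phi> (e * b')) b, e')) T2) T1)"

lemma sT_prodT: "sT (prodT y1 T1 y2 T2) f = sT T1 (\<lambda>b e. f b (e * y2)) + sT T2 (\<lambda>b e. f (y1 * b) e)
   + sT T1 (\<lambda>b e. sT T2 (\<lambda>b' e'. f (sA (\<phi> (e * b')) b) e'))"
  unfolding prodT_def by (simp add: sT_map sT_concat add.assoc)

definition Dec :: "'a \<times> 'f \<Rightarrow> 'a \<Rightarrow> ('a \<times> 'a) list \<Rightarrow> bool" where
  "Dec c y T \<longleftrightarrow> (\<forall>L\<in>Bw. \<forall>R\<in>Bw. CT L c R = CT L (y, 0) R + sT T (\<lambda>b e. CT L (qw [b, e]) R))"

lemma CT_assoc: "CT L (bm x y) R = CT L x (bm y R)"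
  by (simp add: CT_def bm_assoc)
lemma CT_mid: "CT (bm L x) y R = CT L (bm x y) R"
  by (simp add: CT_def bm_assoc)

lemma qw_e_y: "bm (qw [b, e]) (y, 0) = qw [b, e * y]"
  using qw_mult[of "[b]" e y "[]"] by simp
lemma qw_y_e: "bm (y, 0) (qw [b, e]) = qw [y * b, e]"
  using qw_mult[of "[]" y b "[e]"] by simp
lemma qw_e_e: "bm (qw [b, e]) (qw [b', e']) = qw [b, e * b', e']"
  using qw_mult[of "[b]" e b' "[e']"] by simp
lemma qw_sc: "qw [sA c b, e] = bsc c (qw [b, e])"
  by (simp add: qw2)

lemma Dec_mult:
  assumes d1: "Dec c1 y1 T1" and d2: "Dec c2 y2 T2" and c2: "c2 \<in> Bw"
  shows "Dec (bm c1 c2) (y1 * y2) (prodT y1 T1 y2 T2)"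
  unfolding Dec_def
proof (intro ballI)
  fix L R assume L: "L \<in> Bw" and R: "R \<in> Bw"
  have c2R: "bm c2 R \<in> Bw" using c2 R by (rule Bw_mult)
  have Ly1: "bm L (y1, 0) \<in> Bw" using L Bw_A by (rule Bw_mult)
  have Lw: "bm L (qw [b, e]) \<in> Bw" for b e using L Bw_qw[of "[b, e]"] by (simp add: Bw_mult)
  have "CT L (bm c1 c2) R = CT L c1 (bm c2 R)" by (rule CT_assoc)
  also have "\<dots> = CT L (y1, 0) (bm c2 R) + sT T1 (\<lambda>b e. CT L (qw [b, e]) (bm c2 R))"
    using d1 L c2R unfolding Dec_def by blast
  also have "CT L (y1, 0) (bm c2 R) = CT L (y1 * y2, 0) R + sT T2 (\<lambda>b e. CT L (qw [y1 * b, e]) R)"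
  proof -
    have "CT L (y1, 0) (bm c2 R) = CT (bm L (y1, 0)) c2 R" by (simp add: CT_def bm_assoc)
    also have "\<dots> = CT (bm L (y1, 0)) (y2, 0) R + sT T2 (\<lambda>b e. CT (bm L (y1, 0)) (qw [b, e]) R)"
      using d2 Ly1 R unfolding Dec_def by blast
    finally show ?thesis by (simp add: CT_mid qw_y_e)
  qed
  also have "sT T1 (\<lambda>b e. CT L (qw [b, e]) (bm c2 R)) =
      sT T1 (\<lambda>b e. CT L (qw [b, e * y2]) R + sT T2 (\<lambda>b' e'. CT L (qw [sA (\<phi> (e * b')) b, e']) R))"
  proof (rule sT_cong)
    fix b e
    have "CT L (qw [b, e]) (bm c2 R) = CT (bm L (qw [b, e])) c2 R" by (simp add: CT_def bm_assoc)
    also have "\<dots> = CT (bm L (qw [b, e])) (y2, 0) R + sT T2 (\<lambda>b' e'. CT (bm L (qw [b, e])) (qw [b', e']) R)"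
      using d2 Lw R unfolding Dec_def by blast
    also have "\<dots> = CT L (qw [b, e * y2]) R + sT T2 (\<lambda>b' e'. CT L (qw [b, e * b', e']) R)"
      by (simp add: CT_mid qw_e_y qw_e_e)
    also have "sT T2 (\<lambda>b' e'. CT L (qw [b, e * b', e']) R) = sT T2 (\<lambda>b' e'. CT L (qw [sA (\<phi> (e * b')) b, e']) R)"
      by (rule sT_cong) (simp add: K_lemma[OF L R] qw_sc CT_scM)
    finally show "CT L (qw [b, e]) (bm c2 R) =
      CT L (qw [b, e * y2]) R + sT T2 (\<lambda>b' e'. CT L (qw [sA (\<phi> (e * b')) b, e']) R)" .
  qed
  finally show "CT L (bm c1 c2) R = CT L (y1 * y2, 0) R + sT (prodT y1 T1 y2 T2) (\<lambda>b e. CT L (qw [b, e]) R)"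
    by (simp add: sT_prodT sT_add algebra_simps)
qed

lemma CT_pA: "CT L (y1 + y2, 0) R = CT L (y1, 0) R + CT L (y2, 0) R"
  using CT_plusM[of L "(y1, 0)" "(y2, 0)" R] by simp
lemma CT_sA: "CT L (sA k y, 0) R = k * CT L (y, 0) R"
  using CT_scM[of L k "(y, 0)" R] by simp

lemma Dec_plus:
  assumes "Dec c1 y1 T1" "Dec c2 y2 T2"
  shows "Dec (bplus c1 c2) (y1 + y2) (T1 @ T2)"
proof -
  have "(y1 + y2, 0::'f) = bplus (y1, 0) (y2, 0)" by simp
  then show ?thesis using assms unfolding Dec_def by (simp add: CT_plusM CT_pA)
qed

lemma Dec_sc:
  assumes "Dec c y T"
  shows "Dec (bsc k c) (sA k y) (map (\<lambda>(b, e). (sA k b, e)) T)"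
proof -
  have "(sA k y, 0::'f) = bsc k (y, 0)" by simp
  then show ?thesis using assms unfolding Dec_def by (simp add: CT_scM CT_sA sT_map qw_sc sT_cmult algebra_simps)
qed

abbreviation "pp \<equiv> (1::'a, - q)"

lemma Dec_p: "Dec pp 1 [(-1, 1)]"
proof -
  have "pp = bplus (1, 0) (qw [-1, 1])" by (simp add: qw2 qword.simps)
  then show ?thesis unfolding Dec_def by (simp add: CT_plusM)
qed

lemma Dec_pap: "Dec (bm (bm pp (a, 0)) pp) a [(-1, a), (-a, 1), (sA (\<phi> a) 1, 1)]"
proof -
  have e: "bm (bm pp (a, 0)) pp = bplus (a, 0) (bplus (qw [-1, a]) (bplus (qw [-a, 1]) (qw [1, a, 1])))"
    by (simp add: qw2 qword.simps)
  show ?thesis unfolding Dec_def e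
    by (simp add: CT_plusM K_lemma qw_sc CT_scM)
qed

lemma Bw_p: "pp \<in> Bw"
proof -
  have "pp = bplus (1, 0) (qw [-1, 1])" by (simp add: qw2 qword.simps)
  then show ?thesis using Bw_plus Bw_A Bw_qw by (metis list.distinct(1))
qed


definition P2 :: "'a \<Rightarrow> ('a \<times> 'a) list \<Rightarrow> bool" where
  "P2 y T \<longleftrightarrow> (\<forall>u v. sT T (\<lambda>b e. \<phi> e * \<phi> (u * b * v)) = - \<phi> (u * y * v))"
definition P3 :: "'a \<Rightarrow> ('a \<times> 'a) list \<Rightarrow> bool" where
  "P3 y T \<longleftrightarrow> (\<forall>u v. sT T (\<lambda>b e. \<phi> b * \<phi> (u * e * v)) = - \<phi> (u * y * v))"

lemma P2_prod: assumes h: "P2 y2 T2" shows "P2 (y1 * y2) (prodT y1 T1 y2 T2)"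
  unfolding P2_def
proof (intro allI)
  fix u v
  have t2: "sT T2 (\<lambda>b e. \<phi> e * \<phi> (u * (y1 * b) * v)) = - \<phi> (u * (y1 * y2) * v)"
    using h[unfolded P2_def, rule_format, of "u * y1" v] by (simp add: mult.assoc)
  have hh: "\<And>e. sT T2 (\<lambda>b' e'. \<phi> e' * \<phi> (e * b' * 1)) = - \<phi> (e * y2 * 1)"
    using h[unfolded P2_def, rule_format, of _ 1] .
  have t3: "sT T1 (\<lambda>b e. sT T2 (\<lambda>b' e'. \<phi> e' * \<phi> (u * sA (\<phi> (e * b')) b * v)))
      = - sT T1 (\<lambda>b e. \<phi> (e * y2) * \<phi> (u * b * v))"
  proof -
    have "sT T1 (\<lambda>b e. sT T2 (\<lambda>b' e'. \<phi> e' * \<phi> (u * sA (\<phi> (e * b')) b * v)))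
      = sT T1 (\<lambda>b e. sT T2 (\<lambda>b' e'. \<phi> e' * \<phi> (e * b' * 1) * \<phi> (u * b * v)))"
      by (intro sT_cong) (simp add: mult_ac)
    also have "\<dots> = sT T1 (\<lambda>b e. sT T2 (\<lambda>b' e'. \<phi> e' * \<phi> (e * b' * 1)) * \<phi> (u * b * v))"
      by (simp only: sT_multc)
    also have "\<dots> = sT T1 (\<lambda>b e. - \<phi> (e * y2 * 1) * \<phi> (u * b * v))"
      by (simp only: hh)
    finally show ?thesis by (simp add: sT_neg)
  qed
  show "sT (prodT y1 T1 y2 T2) (\<lambda>b e. \<phi> e * \<phi> (u * b * v)) = - \<phi> (u * (y1 * y2) * v)"
    unfolding sT_prodT using t2 t3 by simp
qed

lemma P3_prod: assumes h: "P3 y1 T1" shows "P3 (y1 * y2) (prodT y1 T1 y2 T2)"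
  unfolding P3_def
proof (intro allI)
  fix u v
  have t1: "sT T1 (\<lambda>b e. \<phi> b * \<phi> (u * (e * y2) * v)) = - \<phi> (u * (y1 * y2) * v)"
    using h[unfolded P3_def, rule_format, of u "y2 * v"] by (simp add: mult.assoc)
  have hh: "\<And>b'. sT T1 (\<lambda>b e. \<phi> b * \<phi> (1 * e * b')) = - \<phi> (1 * y1 * b')"
    using h[unfolded P3_def, rule_format, of 1] .
  have t3: "sT T1 (\<lambda>b e. sT T2 (\<lambda>b' e'. \<phi> (sA (\<phi> (e * b')) b) * \<phi> (u * e' * v)))
      = - sT T2 (\<lambda>b e. \<phi> (y1 * b) * \<phi> (u * e * v))"
  proof -
    have "sT T1 (\<lambda>b e. sT T2 (\<lambda>b' e'. \<phi> (sA (\<phi> (e * b')) b) * \<phi> (u * e' * v)))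
      = sT T1 (\<lambda>b e. sT T2 (\<lambda>b' e'. \<phi> b * \<phi> (1 * e * b') * \<phi> (u * e' * v)))"
      by (intro sT_cong) (simp add: mult_ac)
    also have "\<dots> = sT T2 (\<lambda>b' e'. sT T1 (\<lambda>b e. \<phi> b * \<phi> (1 * e * b') * \<phi> (u * e' * v)))"
      by (rule sT_swap)
    also have "\<dots> = sT T2 (\<lambda>b' e'. sT T1 (\<lambda>b e. \<phi> b * \<phi> (1 * e * b')) * \<phi> (u * e' * v))"
      by (simp only: sT_multc)
    also have "\<dots> = sT T2 (\<lambda>b' e'. - \<phi> (1 * y1 * b') * \<phi> (u * e' * v))"
      by (simp only: hh)
    finally show ?thesis by (simp add: sT_neg)
  qed
  show "sT (prodT y1 T1 y2 T2) (\<lambda>b e. \<phi> b * \<phi> (u * e * v)) = - \<phi> (u * (y1 * y2) * v)"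
    unfolding sT_prodT using t1 t3 by simp
qed

lemma P2_plus: "P2 y1 T1 \<Longrightarrow> P2 y2 T2 \<Longrightarrow> P2 (y1 + y2) (T1 @ T2)"
  unfolding P2_def by (simp add: algebra_simps)
lemma P3_plus: "P3 y1 T1 \<Longrightarrow> P3 y2 T2 \<Longrightarrow> P3 (y1 + y2) (T1 @ T2)"
  unfolding P3_def by (simp add: algebra_simps)
lemma P2_sc: assumes h: "P2 y T" shows "P2 (sA k y) (map (\<lambda>(b, e). (sA k b, e)) T)"
  unfolding P2_def
proof (intro allI)
  fix u v
  have "sT T (\<lambda>b e. \<phi> e * \<phi> (u * sA k b * v)) = k * sT T (\<lambda>b e. \<phi> e * \<phi> (u * b * v))"
    by (simp add: sT_cmult[symmetric] mult_ac)
  then show "sT (map (\<lambda>(b, e). (sA k b, e)) T) (\<lambda>b e. \<phi> e * \<phi> (u * b * v)) = - \<phi> (u * sA k y * v)"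
    using h unfolding P2_def by (simp add: sT_map)
qed
lemma P3_sc: assumes h: "P3 y T" shows "P3 (sA k y) (map (\<lambda>(b, e). (sA k b, e)) T)"
  unfolding P3_def
proof (intro allI)
  fix u v
  have "sT T (\<lambda>b e. \<phi> (sA k b) * \<phi> (u * e * v)) = k * sT T (\<lambda>b e. \<phi> b * \<phi> (u * e * v))"
    by (simp add: sT_cmult[symmetric] mult_ac)
  then show "sT (map (\<lambda>(b, e). (sA k b, e)) T) (\<lambda>b e. \<phi> b * \<phi> (u * e * v)) = - \<phi> (u * sA k y * v)"
    using h unfolding P3_def by (simp add: sT_map)
qed

definition Inv :: "'a set \<Rightarrow> 'a \<times> 'f \<Rightarrow> bool" where
  "Inv S c \<longleftrightarrow> c \<in> Bw \<and> fst c \<in> S \<and>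
     (\<exists>T. Dec c (fst c) T \<and> (\<forall>(b, e)\<in>set T. b \<in> S \<and> e \<in> S) \<and> P2 (fst c) T \<and> P3 (fst c) T)"

lemma gen_Inv:
  assumes S: "unital_subalg sA S"
    and c: "c \<in> gen_alg bplus bsc bm pp {bm (bm pp (a, 0)) pp | a. a \<in> S}"
  shows "Inv S c"
  using c
proof (induction c rule: gen_alg.induct)
  have S1: "1 \<in> S" and Sp: "\<And>x y. x \<in> S \<Longrightarrow> y \<in> S \<Longrightarrow> x + y \<in> S"
    and Sm: "\<And>x y. x \<in> S \<Longrightarrow> y \<in> S \<Longrightarrow> x * y \<in> S" and Ss: "\<And>c x. x \<in> S \<Longrightarrow> sA c x \<in> S"
    using S unfolding unital_subalg_def by auto
  have Sn: "\<And>x. x \<in> S \<Longrightarrow> - x \<in> S" using Ss[of _ "-1"] by (metis sA_mone)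
  {
    case (gen x)
    then obtain a where x: "x = bm (bm pp (a, 0)) pp" and a: "a \<in> S" by blast
    have "x \<in> Bw" unfolding x by (intro Bw_mult Bw_p Bw_A)
    moreover have "fst x = a" unfolding x by simp
    moreover have "P2 a [(-1, a), (-a, 1), (sA (\<phi> a) 1, 1)]" unfolding P2_def by (simp add: algebra_simps)
    moreover have "P3 a [(-1, a), (-a, 1), (sA (\<phi> a) 1, 1)]" unfolding P3_def by (simp add: algebra_simps)
    ultimately show ?case unfolding Inv_def using Dec_pap[of a] a S1 Sn Ss
      by (intro conjI exI[of _ "[(-1, a), (-a, 1), (sA (\<phi> a) 1, 1)]"]) (auto simp: x)
  next
    case unit
    have "P2 1 [(-1, 1)]" "P3 1 [(-1, 1)]" unfolding P2_def P3_def by simp_all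
    then show ?case unfolding Inv_def using Dec_p Bw_p S1 Sn
      by (intro conjI exI[of _ "[(-1, 1)]"]) auto
  next
    case (add x y)
    then obtain T1 T2 where "Dec x (fst x) T1" "\<forall>(b, e)\<in>set T1. b \<in> S \<and> e \<in> S" "P2 (fst x) T1" "P3 (fst x) T1"
      "Dec y (fst y) T2" "\<forall>(b, e)\<in>set T2. b \<in> S \<and> e \<in> S" "P2 (fst y) T2" "P3 (fst y) T2"
      and xy: "x \<in> Bw" "y \<in> Bw" "fst x \<in> S" "fst y \<in> S"
      unfolding Inv_def by blast
    moreover have "fst (bplus x y) = fst x + fst y" by (simp add: bplus_def)
    ultimately show ?case unfolding Inv_def
      by (intro conjI exI[of _ "T1 @ T2"]) (auto intro: Bw_plus Sp Dec_plus P2_plus P3_plus)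
  next
    case (scale x k)
    then obtain T where "Dec x (fst x) T" "\<forall>(b, e)\<in>set T. b \<in> S \<and> e \<in> S" "P2 (fst x) T" "P3 (fst x) T"
      and xy: "x \<in> Bw" "fst x \<in> S"
      unfolding Inv_def by blast
    moreover have "fst (bsc k x) = sA k (fst x)" by (simp add: bscale_def)
    ultimately show ?case unfolding Inv_def
      by (intro conjI exI[of _ "map (\<lambda>(b, e). (sA k b, e)) T"]) (auto intro: Bw_sc Ss Dec_sc P2_sc P3_sc)
  next
    case (mult x y)
    then obtain T1 T2 where "Dec x (fst x) T1" "\<forall>(b, e)\<in>set T1. b \<in> S \<and> e \<in> S" "P2 (fst x) T1" "P3 (fst x) T1"
      "Dec y (fst y) T2" "\<forall>(b, e)\<in>set T2. b \<in> S \<and> e \<in> S" "P2 (fst y) T2" "P3 (fst y) T2"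
      and xy: "x \<in> Bw" "y \<in> Bw" "fst x \<in> S" "fst y \<in> S"
      unfolding Inv_def by blast
    moreover have "fst (bm x y) = fst x * fst y" by (simp add: bmult_def)
    moreover have "\<forall>(b, e)\<in>set (prodT (fst x) T1 (fst y) T2). b \<in> S \<and> e \<in> S"
      using calculation unfolding prodT_def by (fastforce intro!: Sm Ss)
    ultimately show ?case unfolding Inv_def
      by (intro conjI exI[of _ "prodT (fst x) T1 (fst y) T2"])
        (auto intro: Bw_mult Sm Dec_mult P2_prod P3_prod)
  }
qed

end

locale Fset = Bset sA \<phi> sF lm rm \<Phi> q
  for sA :: "complex \<Rightarrow> 'a::ring_1 \<Rightarrow> 'a" and \<phi> :: "'a \<Rightarrow> complex"
    and sF :: "complex \<Rightarrow> 'f::ring \<Rightarrow> 'f"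
    and lm :: "'a \<Rightarrow> 'f \<Rightarrow> 'f" and rm :: "'f \<Rightarrow> 'a \<Rightarrow> 'f"
    and \<Phi> :: "'f \<Rightarrow> complex" and q :: 'f +
  fixes I :: "'i set" and A :: "'i \<Rightarrow> 'a set"
  assumes subalg: "\<forall>i\<in>I. unital_subalg sA (A i)"
    and free: "free_family \<phi> I A"
begin

lemma A1: "i \<in> I \<Longrightarrow> 1 \<in> A i" using subalg unfolding unital_subalg_def by blast
lemma Aplus: "i \<in> I \<Longrightarrow> x \<in> A i \<Longrightarrow> y \<in> A i \<Longrightarrow> x + y \<in> A i"
  using subalg unfolding unital_subalg_def by blast
lemma Amult: "i \<in> I \<Longrightarrow> x \<in> A i \<Longrightarrow> y \<in> A i \<Longrightarrow> x * y \<in> A i"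
  using subalg unfolding unital_subalg_def by blast
lemma Asc: "i \<in> I \<Longrightarrow> x \<in> A i \<Longrightarrow> sA c x \<in> A i"
  using subalg unfolding unital_subalg_def by blast

definition cent :: "'a \<Rightarrow> 'a" where "cent x = x - sA (\<phi> x) 1"
lemma cent_phi[simp]: "\<phi> (cent x) = 0" by (simp add: cent_def)
lemma cent_A: "i \<in> I \<Longrightarrow> x \<in> A i \<Longrightarrow> cent x \<in> A i"
proof -
  assume i: "i \<in> I" and x: "x \<in> A i"
  have "cent x = x + sA (- \<phi> x) 1" by (simp add: cent_def)
  then show ?thesis using Aplus[OF i x Asc[OF i A1[OF i], of "- \<phi> x"]] by simp
qed
lemma cent_split: "x = cent x + sA (\<phi> x) 1" by (simp add: cent_def)

definition altc :: "('i \<times> 'a) list \<Rightarrow> bool" where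
  "altc ps \<longleftrightarrow> successively (\<lambda>x y. fst x \<noteq> fst y) ps \<and> (\<forall>(i, x)\<in>set ps. i \<in> I \<and> x \<in> A i \<and> \<phi> x = 0)"

abbreviation pr :: "('i \<times> 'a) list \<Rightarrow> 'a" where "pr ps \<equiv> prod_list (map snd ps)"

lemma altc_elem: "altc ps \<Longrightarrow> x \<in> set ps \<Longrightarrow> fst x \<in> I \<and> snd x \<in> A (fst x) \<and> \<phi> (snd x) = 0"
  unfolding altc_def by (cases x) auto

lemma F1: assumes "altc ps" "ps \<noteq> []" shows "\<phi> (pr ps) = 0"
proof -
  have "\<phi> (prod_list (map snd ps)) = 0"
    using free unfolding free_family_def
  proof (elim allE[of _ "map fst ps"] allE[of _ "map snd ps"] impE)
    show "map fst ps \<noteq> [] \<and> length (map snd ps) = length (map fst ps) \<and> set (map fst ps) \<subseteq> I \<and>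
      successively (\<noteq>) (map fst ps) \<and>
      (\<forall>k<length (map fst ps). map snd ps ! k \<in> A (map fst ps ! k) \<and> \<phi> (map snd ps ! k) = 0)"
      using assms altc_elem[OF assms(1) nth_mem] unfolding altc_def
      by (auto simp: successively_map)
  qed
  then show ?thesis .
qed

lemma altc_append: "altc (xs @ ys) \<longleftrightarrow> altc xs \<and> altc ys \<and> (xs = [] \<or> ys = [] \<or> fst (last xs) \<noteq> fst (hd ys))"
  unfolding altc_def by (auto simp: successively_append_iff)
lemma altc_Cons: "altc (x # ys) \<longleftrightarrow> fst x \<in> I \<and> snd x \<in> A (fst x) \<and> \<phi> (snd x) = 0 \<and> altc ys \<and> (ys = [] \<or> fst x \<noteq> fst (hd ys))"
  unfolding altc_def by (cases x) (auto simp: successively_Cons)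
lemma altc_Nil[simp]: "altc []" unfolding altc_def by simp
lemma altc_rev: "altc (rev xs) \<longleftrightarrow> altc xs"
proof -
  have e: "(\<lambda>x y. fst y \<noteq> fst x) = (\<lambda>(x::'i \<times> 'a) y. fst x \<noteq> fst y)" by (rule ext)+ auto
  show ?thesis unfolding altc_def successively_rev e by simp
qed
lemma altc_take: "altc xs \<Longrightarrow> altc (take k xs)"
  using altc_append[of "take k xs" "drop k xs"] by simp
lemma altc_drop: "altc xs \<Longrightarrow> altc (drop k xs)"
  using altc_append[of "take k xs" "drop k xs"] by simp

lemma F3:
  assumes P: "altc P" and Q: "altc Q" and i: "i \<in> I" and w: "w \<in> A i"
    and lP: "P \<noteq> [] \<Longrightarrow> fst (last P) \<noteq> i" and hQ: "Q \<noteq> [] \<Longrightarrow> fst (hd Q) \<noteq> i"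
  shows "\<phi> (pr P * w * pr Q) = \<phi> w * \<phi> (pr P * pr Q)"
proof -
  have alt: "altc (P @ [(i, cent w)] @ Q)"
    using P Q i cent_A[OF i w] lP hQ by (auto simp: altc_append altc_Cons)
  have "\<phi> (pr P * cent w * pr Q) = 0"
    using F1[OF alt] by (simp add: mult.assoc)
  moreover have "pr P * w * pr Q = pr P * cent w * pr Q + sA (\<phi> w) (pr P * pr Q)"
    by (subst cent_split[of w]) (simp add: algebra_simps)
  ultimately show ?thesis by simp
qed

definition good :: "'a \<Rightarrow> ('i \<times> 'a) list \<Rightarrow> bool" where
  "good x zs \<longleftrightarrow> (\<forall>k<length zs. \<forall>b\<in>A (fst (zs ! k)). \<phi> (x * pr (take k zs) * b) = \<phi> (x * pr (take k zs)) * \<phi> b)"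

lemma good_shift: "good x (z # zs) \<Longrightarrow> good (x * snd z) zs"
  unfolding good_def
proof (intro allI impI ballI)
  fix k b assume h: "\<forall>k<length (z # zs). \<forall>b\<in>A (fst ((z # zs) ! k)). \<phi> (x * pr (take k (z # zs)) * b) = \<phi> (x * pr (take k (z # zs))) * \<phi> b"
    and k: "k < length zs" and b: "b \<in> A (fst (zs ! k))"
  show "\<phi> (x * snd z * pr (take k zs) * b) = \<phi> (x * snd z * pr (take k zs)) * \<phi> b"
    using h[rule_format, of "Suc k" b] k b by (simp add: mult.assoc)
qed

lemma good_0: "good x (z # zs) \<Longrightarrow> b \<in> A (fst z) \<Longrightarrow> \<phi> (x * b) = \<phi> x * \<phi> b"
  unfolding good_def by (erule allE[of _ 0]) simp

lemma good_e:
  assumes i: "i \<in> I" and e: "e \<in> A i" and zs: "altc zs" and hd: "zs \<noteq> [] \<Longrightarrow> fst (hd zs) \<noteq> i"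
  shows "good e zs"
  unfolding good_def
proof (intro allI impI ballI)
  fix k b assume k: "k < length zs" and b: "b \<in> A (fst (zs ! k))"
  define Q where "Q = take k zs"
  define j where "j = fst (zs ! k)"
  have tk: "take (Suc k) zs = Q @ [zs ! k]" using k by (simp add: Q_def take_Suc_conv_app_nth)
  have altk: "altc (Q @ [zs ! k])" using altc_take[OF zs, of "Suc k"] tk by simp
  have j: "j \<in> I" using altk by (auto simp: altc_append altc_Cons j_def)
  have cb: "cent b \<in> A j" using cent_A[OF j] b by (simp add: j_def)
  have altQb: "altc (Q @ [(j, cent b)])" using altk cb j by (auto simp: altc_append altc_Cons j_def)
  have hdQ: "Q \<noteq> [] \<Longrightarrow> fst (hd Q) \<noteq> i" using hd by (auto simp: Q_def)
  have Q0: "Q = [] \<Longrightarrow> j \<noteq> i" using hd k by (auto simp: Q_def j_def hd_conv_nth)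
  have ne: "i \<noteq> fst (hd (Q @ [(j, cent b)]))" using hdQ Q0 by (cases Q) auto
  have alt2: "altc ((i, cent e) # (Q @ [(j, cent b)]))"
    unfolding altc_Cons using altQb i cent_A[OF i e] ne by simp
  have z1: "\<phi> (cent e * pr Q * cent b) = 0" using F1[OF alt2] by (simp add: mult.assoc)
  have z2: "\<phi> (pr Q * cent b) = 0" using F1[OF altQb] by simp
  have "\<phi> (e * pr Q * cent b) = 0"
    using z1 z2 by (subst cent_split[of e]) (simp add: algebra_simps)
  moreover have "e * pr Q * b = e * pr Q * cent b + sA (\<phi> b) (e * pr Q)"
    by (subst cent_split[of b]) (simp add: algebra_simps)
  ultimately show "\<phi> (e * pr (take k zs) * b) = \<phi> (e * pr (take k zs)) * \<phi> b"
    by (simp add: Q_def)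
qed

lemma F2: "altc ps \<Longrightarrow> altc rs \<Longrightarrow> \<phi> (pr (rev ps) * pr rs) =
   (if map fst ps = map fst rs then \<Prod>k<length ps. \<phi> (snd (ps ! k) * snd (rs ! k)) else 0)"
proof (induction ps arbitrary: rs)
  case Nil
  then show ?case using F1[of rs] by auto
next
  case (Cons p ps)
  show ?case
  proof (cases rs)
    case Nil
    have a: "altc (rev (p # ps))" using Cons.prems(1) altc_rev by blast
    have "\<phi> (pr (rev (p # ps))) = 0" by (rule F1[OF a]) simp
    then show ?thesis using Nil by simp
  next
    case (Cons r rs')
    have ap: "altc ps" and ar: "altc rs'" using Cons.prems \<open>rs = r # rs'\<close> by (auto simp: altc_Cons)
    show ?thesis
    proof (cases "fst p = fst r")
      case False
      have "altc (rev ps @ [p, r] @ rs')"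
        using Cons.prems \<open>rs = r # rs'\<close> False
        by (auto simp: altc_append altc_Cons altc_rev last_rev)
      then have "\<phi> (pr (rev ps @ [p, r] @ rs')) = 0" by (rule F1) simp
      then show ?thesis using False \<open>rs = r # rs'\<close> by (simp add: mult.assoc)
    next
      case True
      define i where "i = fst p"
      have i: "i \<in> I" and pA: "snd p \<in> A i" and rA: "snd r \<in> A i"
        using Cons.prems \<open>rs = r # rs'\<close> True by (auto simp: altc_Cons i_def)
      have "\<phi> (pr (rev ps) * (snd p * snd r) * pr rs') = \<phi> (snd p * snd r) * \<phi> (pr (rev ps) * pr rs')"
        by (rule F3) (use Cons.prems \<open>rs = r # rs'\<close> True ap ar i Amult[OF i pA rA] in
           \<open>auto simp: altc_rev altc_Cons last_rev i_def\<close>)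
      then show ?thesis using Cons.IH[OF ap ar] True \<open>rs = r # rs'\<close>
        by (simp add: mult.assoc prod.lessThan_Suc_shift del: prod.lessThan_Suc)
    qed
  qed
qed


lemma Psi_Dec: assumes "Dec c y T" shows "Psi c = \<phi> y + sT T (\<lambda>b e. \<phi> (b * e))"
proof -
  have "Psi c = CT (1, 0) c (1, 0)" by (simp add: CT_def)
  also have "\<dots> = CT (1, 0) (y, 0) (1, 0) + sT T (\<lambda>b e. CT (1, 0) (qw [b, e]) (1, 0))"
    using assms Bw_A[of 1] unfolding Dec_def by blast
  also have "CT (1, 0) (y, 0) (1, 0) = \<phi> y" by (simp add: CT_def Psi_def)
  also have "sT T (\<lambda>b e. CT (1, 0) (qw [b, e]) (1, 0)) = sT T (\<lambda>b e. \<phi> (b * e))"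
    by (rule sT_cong) (simp add: CT_def Psi_qw)
  finally show ?thesis .
qed

fun foldD :: "('i \<times> 'a \<times> ('a \<times> 'a) list) list \<Rightarrow> 'a \<times> ('a \<times> 'a) list" where
  "foldD [] = (1, [(-1, 1)])"
| "foldD ((i, y, T) # ds) = (y * fst (foldD ds), prodT y T (fst (foldD ds)) (snd (foldD ds)))"

definition zsOf :: "('i \<times> 'a \<times> ('a \<times> 'a) list) list \<Rightarrow> ('i \<times> 'a) list" where
  "zsOf ds = map (\<lambda>(i, y, T). (i, y)) ds"

lemma zsOf_simps[simp]: "zsOf [] = []" "zsOf ((i, y, T) # ds) = (i, y) # zsOf ds"
  by (simp_all add: zsOf_def)
lemma length_zsOf[simp]: "length (zsOf ds) = length ds" by (simp add: zsOf_def)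

definition okD :: "'i \<times> 'a \<times> ('a \<times> 'a) list \<Rightarrow> bool" where
  "okD d \<longleftrightarrow> (case d of (i, y, T) \<Rightarrow> (\<forall>(b, e)\<in>set T. b \<in> A i \<and> e \<in> A i) \<and> P2 y T \<and> P3 y T)"

lemma fst_foldD: "fst (foldD ds) = pr (zsOf ds)"
  by (induction ds rule: foldD.induct) auto

lemma glue: "list_all2 (\<lambda>c d. c \<in> Bw \<and> Dec c (fst (snd d)) (snd (snd d))) cs ds \<Longrightarrow>
   foldr bm cs pp \<in> Bw \<and> Dec (foldr bm cs pp) (fst (foldD ds)) (snd (foldD ds))"
proof (induction cs arbitrary: ds)
  case Nil then show ?case using Dec_p Bw_p by simp
next
  case (Cons c cs)
  then obtain i y T ds' where ds: "ds = (i, y, T) # ds'" and c: "c \<in> Bw" "Dec c y T"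
    and r: "list_all2 (\<lambda>c d. c \<in> Bw \<and> Dec c (fst (snd d)) (snd (snd d))) cs ds'"
    by (cases ds) (auto simp: list_all2_Cons1)
  from Cons.IH[OF r] have ih: "foldr bm cs pp \<in> Bw" "Dec (foldr bm cs pp) (fst (foldD ds')) (snd (foldD ds'))" by auto
  show ?case using ds c ih by (auto intro: Bw_mult Dec_mult)
qed

lemma rho: "(\<forall>d\<in>set ds. okD d) \<Longrightarrow> altc (zsOf ds) \<Longrightarrow> good x (zsOf ds) \<Longrightarrow>
  sT (snd (foldD ds)) (\<lambda>b e. \<phi> (x * b) * \<phi> (z * e)) = - \<phi> x * \<phi> (z * pr (zsOf ds))"
proof (induction ds arbitrary: x z rule: foldD.induct)
  case 1 then show ?case by simp
next
  case (2 i y T ds)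
  define Y where "Y = pr (zsOf ds)"
  define TT where "TT = snd (foldD ds)"
  have ok: "\<forall>d\<in>set ds. okD d" and okT: "\<forall>(b, e)\<in>set T. b \<in> A i \<and> e \<in> A i"
    and p2: "P2 y T" and p3: "P3 y T"
    using "2.prems"(1) unfolding okD_def by auto
  have alt: "altc (zsOf ds)" and i: "i \<in> I" and y: "y \<in> A i" and y0: "\<phi> y = 0"
    and hd: "zsOf ds \<noteq> [] \<Longrightarrow> fst (hd (zsOf ds)) \<noteq> i"
    using "2.prems"(2) by (auto simp: altc_Cons)
  have gx: "\<And>b. b \<in> A i \<Longrightarrow> \<phi> (x * b) = \<phi> x * \<phi> b"
    using good_0[of x "(i, y)" "zsOf ds"] "2.prems"(3) by simp
  have gxy: "good (x * y) (zsOf ds)" using good_shift[of x "(i, y)"] "2.prems"(3) by simp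
  have t1: "sT T (\<lambda>b e. \<phi> (x * b) * \<phi> (z * (e * Y))) = - \<phi> x * \<phi> (z * y * Y)"
  proof -
    have "sT T (\<lambda>b e. \<phi> (x * b) * \<phi> (z * (e * Y))) = sT T (\<lambda>b e. \<phi> x * (\<phi> b * \<phi> (z * e * Y)))"
      by (rule sT_cong) (use okT gx in \<open>auto simp: mult.assoc\<close>)
    also have "\<dots> = \<phi> x * sT T (\<lambda>b e. \<phi> b * \<phi> (z * e * Y))" by (rule sT_cmult)
    also have "\<dots> = - \<phi> x * \<phi> (z * y * Y)" using p3 unfolding P3_def by simp
    finally show ?thesis .
  qed
  have t2: "sT TT (\<lambda>b e. \<phi> (x * (y * b)) * \<phi> (z * e)) = 0"
  proof -
    have "sT TT (\<lambda>b e. \<phi> (x * (y * b)) * \<phi> (z * e)) = sT TT (\<lambda>b e. \<phi> (x * y * b) * \<phi> (z * e))"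
      by (simp add: mult.assoc)
    also have "\<dots> = - \<phi> (x * y) * \<phi> (z * Y)" unfolding TT_def Y_def by (rule "2.IH"[OF ok alt gxy])
    also have "\<phi> (x * y) = 0" using gx[OF y] y0 by simp
    finally show ?thesis by simp
  qed
  have t3: "sT T (\<lambda>b e. sT TT (\<lambda>b' e'. \<phi> (x * sA (\<phi> (e * b')) b) * \<phi> (z * e'))) = 0"
  proof -
    have ge: "\<And>e. e \<in> A i \<Longrightarrow> good e (zsOf ds)" using good_e[OF i _ alt hd] by blast
    have "sT T (\<lambda>b e. sT TT (\<lambda>b' e'. \<phi> (x * sA (\<phi> (e * b')) b) * \<phi> (z * e')))
       = sT T (\<lambda>b e. \<phi> (x * b) * sT TT (\<lambda>b' e'. \<phi> (e * b') * \<phi> (z * e')))"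
      by (simp add: sT_cmult[symmetric] mult_ac)
    also have "\<dots> = sT T (\<lambda>b e. \<phi> (x * b) * (- \<phi> e * \<phi> (z * Y)))"
      by (rule sT_cong) (use okT ge "2.IH"[OF ok alt] in \<open>auto simp: TT_def Y_def\<close>)
    also have "\<dots> = sT T (\<lambda>b e. (- \<phi> x * \<phi> (z * Y)) * (\<phi> b * \<phi> (1 * e * 1)))"
      by (rule sT_cong) (use okT gx in \<open>auto simp: mult_ac\<close>)
    also have "\<dots> = (- \<phi> x * \<phi> (z * Y)) * sT T (\<lambda>b e. \<phi> b * \<phi> (1 * e * 1))" by (rule sT_cmult)
    also have "sT T (\<lambda>b e. \<phi> b * \<phi> (1 * e * 1)) = 0" using p3[unfolded P3_def, rule_format, of 1 1] y0 by simp
    finally show ?thesis by simp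
  qed
  have "sT (snd (foldD ((i, y, T) # ds))) (\<lambda>b e. \<phi> (x * b) * \<phi> (z * e)) =
     sT T (\<lambda>b e. \<phi> (x * b) * \<phi> (z * (e * Y))) + sT TT (\<lambda>b e. \<phi> (x * (y * b)) * \<phi> (z * e)) +
     sT T (\<lambda>b e. sT TT (\<lambda>b' e'. \<phi> (x * sA (\<phi> (e * b')) b) * \<phi> (z * e')))"
    by (simp add: sT_prodT fst_foldD Y_def TT_def)
  also have "\<dots> = - \<phi> x * \<phi> (z * pr (zsOf ((i, y, T) # ds)))"
    using t1 t2 t3 by (simp add: Y_def mult.assoc)
  finally show ?case .
qed

fun Sig :: "'a \<Rightarrow> ('i \<times> 'a \<times> ('a \<times> 'a) list) list \<Rightarrow> complex" where
  "Sig u [] = - \<phi> u"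
| "Sig u ((i, y, T) # ds) = Sig (u * y) ds +
     sT T (\<lambda>b e. \<phi> (u * b * e * pr (zsOf ds)) - \<phi> e * \<phi> (u * b * pr (zsOf ds)))"

lemma sigma: "(\<forall>d\<in>set ds. okD d) \<Longrightarrow> altc (zsOf ds) \<Longrightarrow>
  sT (snd (foldD ds)) (\<lambda>b e. \<phi> (u * b * e)) = Sig u ds"
proof (induction ds arbitrary: u rule: foldD.induct)
  case 1 then show ?case by simp
next
  case (2 i y T ds)
  define Y where "Y = pr (zsOf ds)"
  define TT where "TT = snd (foldD ds)"
  have ok: "\<forall>d\<in>set ds. okD d" and okT: "\<forall>(b, e)\<in>set T. b \<in> A i \<and> e \<in> A i"
    using "2.prems"(1) unfolding okD_def by auto
  have alt: "altc (zsOf ds)" and i: "i \<in> I"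
    and hd: "zsOf ds \<noteq> [] \<Longrightarrow> fst (hd (zsOf ds)) \<noteq> i"
    using "2.prems"(2) by (auto simp: altc_Cons)
  have ge: "\<And>e. e \<in> A i \<Longrightarrow> good e (zsOf ds)" using good_e[OF i _ alt hd] by blast
  have t2: "sT TT (\<lambda>b e. \<phi> (u * (y * b) * e)) = Sig (u * y) ds"
    using "2.IH"[OF ok alt, of "u * y"] by (simp add: TT_def mult.assoc)
  have t3: "sT T (\<lambda>b e. sT TT (\<lambda>b' e'. \<phi> (u * sA (\<phi> (e * b')) b * e'))) =
      sT T (\<lambda>b e. - \<phi> e * \<phi> (u * b * Y))"
  proof -
    have "sT T (\<lambda>b e. sT TT (\<lambda>b' e'. \<phi> (u * sA (\<phi> (e * b')) b * e'))) =
       sT T (\<lambda>b e. sT TT (\<lambda>b' e'. \<phi> (e * b') * \<phi> ((u * b) * e')))"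
      by (simp add: mult.assoc)
    also have "\<dots> = sT T (\<lambda>b e. - \<phi> e * \<phi> (u * b * Y))"
      by (rule sT_cong) (use okT ge rho[OF ok alt] in \<open>auto simp: TT_def Y_def\<close>)
    finally show ?thesis .
  qed
  have "sT (snd (foldD ((i, y, T) # ds))) (\<lambda>b e. \<phi> (u * b * e)) =
     sT T (\<lambda>b e. \<phi> (u * b * (e * Y))) + sT TT (\<lambda>b e. \<phi> (u * (y * b) * e)) +
     sT T (\<lambda>b e. sT TT (\<lambda>b' e'. \<phi> (u * sA (\<phi> (e * b')) b * e')))"
    by (simp add: sT_prodT fst_foldD Y_def TT_def)
  also have "\<dots> = Sig u ((i, y, T) # ds)"
    using t2 t3 by (simp add: Y_def sT_diff sT_neg mult.assoc)
  finally show ?case .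
qed

definition psiT :: "('a \<times> 'a) list \<Rightarrow> complex" where "psiT T = sT T (\<lambda>b e. \<phi> (b * e))"

lemma Sig_eval: "(\<forall>d\<in>set ds. okD d) \<Longrightarrow> altc (pre @ zsOf ds) \<Longrightarrow>
  Sig (pr pre) ds = - \<phi> (pr (pre @ zsOf ds)) +
    (\<Sum>k<length ds. psiT (snd (snd (ds ! k))) * \<phi> (pr (pre @ take k (zsOf ds)) * pr (drop (Suc k) (zsOf ds))))"
proof (induction ds arbitrary: pre rule: foldD.induct)
  case 1 then show ?case by simp
next
  case (2 i y T ds)
  define Y where "Y = pr (zsOf ds)"
  have ok: "\<forall>d\<in>set ds. okD d" and okT: "\<forall>(b, e)\<in>set T. b \<in> A i \<and> e \<in> A i" and p2: "P2 y T"
    using "2.prems"(1) unfolding okD_def by auto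
  have altall: "altc (pre @ (i, y) # zsOf ds)" using "2.prems"(2) by simp
  have alt: "altc (zsOf ds)" and i: "i \<in> I" and hd: "zsOf ds \<noteq> [] \<Longrightarrow> fst (hd (zsOf ds)) \<noteq> i"
    and apre: "altc pre" and lpre: "pre \<noteq> [] \<Longrightarrow> fst (last pre) \<noteq> i"
    using altall by (auto simp: altc_Cons altc_append)
  have z: "\<phi> (pr (pre @ (i, y) # zsOf ds)) = 0" using F1[OF altall] by simp
  have ih: "Sig (pr pre * y) ds = (\<Sum>k<length ds. psiT (snd (snd (ds ! k))) *
      \<phi> (pr (pre @ (i, y) # take k (zsOf ds)) * pr (drop (Suc k) (zsOf ds))))"
    using "2.IH"[OF ok, of "pre @ [(i, y)]"] altall z by simp
  have tm: "sT T (\<lambda>b e. \<phi> (pr pre * b * e * Y) - \<phi> e * \<phi> (pr pre * b * Y)) = psiT T * \<phi> (pr pre * Y)"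
  proof -
    have "sT T (\<lambda>b e. \<phi> (pr pre * b * e * Y)) = sT T (\<lambda>b e. \<phi> (b * e) * \<phi> (pr pre * Y))"
    proof (rule sT_cong)
      fix b e assume "(b, e) \<in> set T"
      then have be: "b * e \<in> A i" using okT i by (auto intro: Amult)
      show "\<phi> (pr pre * b * e * Y) = \<phi> (b * e) * \<phi> (pr pre * Y)"
        using F3[OF apre alt i be lpre hd] by (simp add: Y_def mult.assoc)
    qed
    also have "\<dots> = psiT T * \<phi> (pr pre * Y)" by (simp add: psiT_def sT_multc)
    finally have a: "sT T (\<lambda>b e. \<phi> (pr pre * b * e * Y)) = psiT T * \<phi> (pr pre * Y)" .
    have b: "sT T (\<lambda>b e. \<phi> e * \<phi> (pr pre * b * Y)) = 0"
      using p2 z unfolding P2_def by (simp add: Y_def mult.assoc)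
    show ?thesis using a b by (simp add: sT_diff)
  qed
  show ?case
    using ih tm z by (simp add: Y_def sum.lessThan_Suc_shift del: sum.lessThan_Suc)
qed

lemma main_val:
  assumes ok: "\<forall>d\<in>set ds. okD d" and alt: "altc (zsOf ds)"
  shows "\<phi> (fst (foldD ds)) + sT (snd (foldD ds)) (\<lambda>b e. \<phi> (b * e)) =
    (\<Sum>k<length ds. psiT (snd (snd (ds ! k))) * \<phi> (pr (take k (zsOf ds)) * pr (drop (Suc k) (zsOf ds))))"
proof -
  have "sT (snd (foldD ds)) (\<lambda>b e. \<phi> (b * e)) = Sig (pr []) ds"
    using sigma[OF ok alt, of 1] by simp
  also have "\<dots> = - \<phi> (pr (zsOf ds)) +
    (\<Sum>k<length ds. psiT (snd (snd (ds ! k))) * \<phi> (pr (take k (zsOf ds)) * pr (drop (Suc k) (zsOf ds))))"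
    using Sig_eval[OF ok, of "[]"] alt by simp
  finally show ?thesis by (simp add: fst_foldD)
qed


lemma final_comb:
  assumes zs: "altc zs"
  shows "(\<Sum>k<length zs. f k * \<phi> (pr (take k zs) * pr (drop (Suc k) zs))) =
    (if odd (length zs) \<and> (\<forall>k<length zs. fst (zs ! k) = fst (zs ! (length zs - 1 - k)))
     then (\<Prod>k<length zs div 2. \<phi> (snd (zs ! k) * snd (zs ! (length zs - 1 - k)))) * f (length zs div 2)
     else 0)"
proof -
  define n where "n = length zs"
  have E: "\<phi> (pr (take k zs) * pr (drop (Suc k) zs)) =
     (if n = 2 * k + 1 \<and> (\<forall>j<k. fst (zs ! (k - Suc j)) = fst (zs ! (Suc k + j)))
      then \<Prod>j<k. \<phi> (snd (zs ! (k - Suc j)) * snd (zs ! (Suc k + j))) else 0)" if k: "k < n" for k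
  proof -
    have a1: "altc (rev (take k zs))" using altc_take[OF zs] altc_rev by blast
    have a2: "altc (drop (Suc k) zs)" using altc_drop[OF zs] .
    have F: "\<phi> (pr (take k zs) * pr (drop (Suc k) zs)) =
      (if map fst (rev (take k zs)) = map fst (drop (Suc k) zs)
       then \<Prod>j<length (rev (take k zs)). \<phi> (snd (rev (take k zs) ! j) * snd (drop (Suc k) zs ! j)) else 0)"
      using F2[OF a1 a2] by simp
    have len: "length (rev (take k zs)) = k" using k n_def by simp
    have nth1: "rev (take k zs) ! j = zs ! (k - Suc j)" if "j < k" for j
      using that k n_def by (simp add: rev_nth)
    have nth2: "drop (Suc k) zs ! j = zs ! (Suc k + j)" if "j < n - Suc k" for j
      using that k n_def by simp
    have C: "map fst (rev (take k zs)) = map fst (drop (Suc k) zs) \<longleftrightarrow>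
        (n = 2 * k + 1 \<and> (\<forall>j<k. fst (zs ! (k - Suc j)) = fst (zs ! (Suc k + j))))"
    proof
      assume h: "map fst (rev (take k zs)) = map fst (drop (Suc k) zs)"
      then have "length (map fst (rev (take k zs))) = length (map fst (drop (Suc k) zs))" by simp
      then have nk: "n = 2 * k + 1" using k len n_def by simp
      show "n = 2 * k + 1 \<and> (\<forall>j<k. fst (zs ! (k - Suc j)) = fst (zs ! (Suc k + j)))"
      proof (intro conjI allI impI nk)
        fix j assume j: "j < k"
        have "map fst (rev (take k zs)) ! j = map fst (drop (Suc k) zs) ! j" using h by simp
        then show "fst (zs ! (k - Suc j)) = fst (zs ! (Suc k + j))"
          using j nk nth1[OF j] nth2[of j] len n_def by simp
      qed
    next
      assume h: "n = 2 * k + 1 \<and> (\<forall>j<k. fst (zs ! (k - Suc j)) = fst (zs ! (Suc k + j)))"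
      show "map fst (rev (take k zs)) = map fst (drop (Suc k) zs)"
      proof (rule nth_equalityI)
        show "length (map fst (rev (take k zs))) = length (map fst (drop (Suc k) zs))"
          using h len n_def by simp
        fix j assume "j < length (map fst (rev (take k zs)))"
        then have j: "j < k" using len by simp
        then show "map fst (rev (take k zs)) ! j = map fst (drop (Suc k) zs) ! j"
          using h nth1[OF j] nth2[of j] len n_def by simp
      qed
    qed
    have P: "n = 2 * k + 1 \<Longrightarrow> (\<Prod>j<length (rev (take k zs)). \<phi> (snd (rev (take k zs) ! j) * snd (drop (Suc k) zs ! j)))
        = (\<Prod>j<k. \<phi> (snd (zs ! (k - Suc j)) * snd (zs ! (Suc k + j))))"
      unfolding len by (rule prod.cong) (auto simp: nth1 nth2)
    show ?thesis using F C P by auto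
  qed
  show ?thesis
  proof (cases "odd n \<and> (\<forall>k<n. fst (zs ! k) = fst (zs ! (n - 1 - k)))")
    case True
    define h where "h = n div 2"
    have nh: "n = 2 * h + 1" using True h_def by simp
    have hn: "h < n" using nh by simp
    have c: "\<forall>j<h. fst (zs ! (h - Suc j)) = fst (zs ! (Suc h + j))"
    proof (intro allI impI)
      fix j assume j: "j < h"
      have "n - 1 - (h - Suc j) = Suc h + j" using j nh by simp
      then show "fst (zs ! (h - Suc j)) = fst (zs ! (Suc h + j))"
        using True j nh by (metis less_imp_diff_less hn order.strict_trans)
    qed
    have Eh: "\<phi> (pr (take h zs) * pr (drop (Suc h) zs)) = (\<Prod>k<h. \<phi> (snd (zs ! k) * snd (zs ! (n - 1 - k))))"
    proof -
      have "(\<Prod>j<h. \<phi> (snd (zs ! (h - Suc j)) * snd (zs ! (Suc h + j)))) =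
            (\<Prod>j<h. (\<lambda>k. \<phi> (snd (zs ! k) * snd (zs ! (n - 1 - k)))) (h - Suc j))"
        by (rule prod.cong) (use nh in auto)
      also have "\<dots> = (\<Prod>k<h. \<phi> (snd (zs ! k) * snd (zs ! (n - 1 - k))))"
        by (rule prod.nat_diff_reindex)
      finally show ?thesis using E[OF hn] nh c by simp
    qed
    have "(\<Sum>k<n. f k * \<phi> (pr (take k zs) * pr (drop (Suc k) zs))) =
          (\<Sum>k<n. if k = h then f h * \<phi> (pr (take h zs) * pr (drop (Suc h) zs)) else 0)"
    proof (rule sum.cong)
      fix k assume "k \<in> {..<n}"
      then have k: "k < n" by simp
      show "f k * \<phi> (pr (take k zs) * pr (drop (Suc k) zs)) =
          (if k = h then f h * \<phi> (pr (take h zs) * pr (drop (Suc h) zs)) else 0)"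
      proof (cases "k = h")
        case True then show ?thesis by simp
      next
        case False
        then have "n \<noteq> 2 * k + 1" using nh by simp
        then show ?thesis using E[OF k] False by simp
      qed
    qed simp
    also have "\<dots> = f h * \<phi> (pr (take h zs) * pr (drop (Suc h) zs))" using hn by simp
    also have "\<dots> = (\<Prod>k<h. \<phi> (snd (zs ! k) * snd (zs ! (n - 1 - k)))) * f h"
      unfolding Eh by (rule mult.commute)
    finally have S: "(\<Sum>k<n. f k * \<phi> (pr (take k zs) * pr (drop (Suc k) zs))) =
        (\<Prod>k<h. \<phi> (snd (zs ! k) * snd (zs ! (n - 1 - k)))) * f h" .
    have T: "odd (length zs) \<and> (\<forall>k<length zs. fst (zs ! k) = fst (zs ! (length zs - 1 - k)))"
      using True unfolding n_def .
    show ?thesis unfolding if_P[OF T] using S unfolding n_def h_def .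
  next
    case False
    have "f k * \<phi> (pr (take k zs) * pr (drop (Suc k) zs)) = 0" if k: "k < n" for k
    proof -
      have nc: "\<not> (n = 2 * k + 1 \<and> (\<forall>j<k. fst (zs ! (k - Suc j)) = fst (zs ! (Suc k + j))))"
      proof
        assume h: "n = 2 * k + 1 \<and> (\<forall>j<k. fst (zs ! (k - Suc j)) = fst (zs ! (Suc k + j)))"
        have hn1: "n = 2 * k + 1" using h by blast
        have pall: "\<forall>m<n. fst (zs ! m) = fst (zs ! (n - 1 - m))"
        proof (intro allI impI)
          fix m assume m: "m < n"
          show "fst (zs ! m) = fst (zs ! (n - 1 - m))"
          proof (cases "m < k")
            case True
            have e1: "k - Suc (k - Suc m) = m" using True by arith
            have e2: "Suc k + (k - Suc m) = n - 1 - m" using True hn1 by arith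
            have "k - Suc m < k" using True by arith
            then have "fst (zs ! (k - Suc (k - Suc m))) = fst (zs ! (Suc k + (k - Suc m)))" using h by blast
            then show ?thesis unfolding e1 e2 .
          next
            case False
            show ?thesis
            proof (cases "m = k")
              case True then show ?thesis using hn1 by simp
            next
              case False
              define m' where "m' = n - 1 - m"
              have m': "m' < k" using \<open>\<not> m < k\<close> False m hn1 unfolding m'_def by arith
              have e1: "k - Suc (k - Suc m') = m'" using m' by arith
              have e2: "Suc k + (k - Suc m') = m" using m' hn1 m unfolding m'_def by arith
              have "k - Suc m' < k" using m' by arith
              then have "fst (zs ! (k - Suc (k - Suc m'))) = fst (zs ! (Suc k + (k - Suc m')))" using h by blast
              then have "fst (zs ! m') = fst (zs ! m)" unfolding e1 e2 .
              then show ?thesis unfolding m'_def by simp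
            qed
          qed
        qed
        have "odd n" using hn1 by simp
        then show False using False pall by blast
      qed
      show ?thesis unfolding E[OF k] if_not_P[OF nc] by simp
    qed
    then have Z: "(\<Sum>k<n. f k * \<phi> (pr (take k zs) * pr (drop (Suc k) zs))) = 0"
      by (intro sum.neutral) blast
    have F': "\<not> (odd (length zs) \<and> (\<forall>k<length zs. fst (zs ! k) = fst (zs ! (length zs - 1 - k))))"
      using False unfolding n_def .
    show ?thesis unfolding if_not_P[OF F'] using Z unfolding n_def .
  qed
qed

lemma fst_foldr: "fst (foldr bm cs pp) = prod_list (map fst cs)"
  by (induction cs) (auto simp: bmult_def)

lemma main:
  assumes ne: "iss \<noteq> []" and len: "length cs = length iss" and sub: "set iss \<subseteq> I"
    and alt: "successively (\<noteq>) iss"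
    and mem: "\<forall>k<length iss. cs ! k \<in> gen_alg bplus bsc bm pp {bm (bm pp (a, 0)) pp | a. a \<in> A (iss ! k)}
                \<and> \<phi> (fst (cs ! k)) = 0"
  shows "\<phi> (fst (mprod bm pp cs)) = 0 \<and>
    Psi (mprod bm pp cs) = (if odd (length cs) \<and> (\<forall>k<length cs. iss ! k = iss ! (length cs - 1 - k))
      then (\<Prod>k<length cs div 2. \<phi> (fst (bm (cs ! k) (cs ! (length cs - 1 - k))))) * Psi (cs ! (length cs div 2))
      else 0)"
proof -
  define n where "n = length cs"
  have "\<forall>k. \<exists>T. k < n \<longrightarrow> cs ! k \<in> Bw \<and> fst (cs ! k) \<in> A (iss ! k) \<and> Dec (cs ! k) (fst (cs ! k)) T \<and>
      (\<forall>(b, e)\<in>set T. b \<in> A (iss ! k) \<and> e \<in> A (iss ! k)) \<and> P2 (fst (cs ! k)) T \<and> P3 (fst (cs ! k)) T"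
  proof (intro allI)
    fix k
    show "\<exists>T. k < n \<longrightarrow> cs ! k \<in> Bw \<and> fst (cs ! k) \<in> A (iss ! k) \<and> Dec (cs ! k) (fst (cs ! k)) T \<and>
      (\<forall>(b, e)\<in>set T. b \<in> A (iss ! k) \<and> e \<in> A (iss ! k)) \<and> P2 (fst (cs ! k)) T \<and> P3 (fst (cs ! k)) T"
    proof (cases "k < n")
      case True
      have kI: "iss ! k \<in> I" using sub True len n_def by (auto dest: nth_mem)
      have "Inv (A (iss ! k)) (cs ! k)"
        by (rule gen_Inv) (use subalg kI mem True len n_def in auto)
      then show ?thesis unfolding Inv_def by blast
    qed simp
  qed
  then obtain Tf where Tf: "\<And>k. k < n \<Longrightarrow> cs ! k \<in> Bw \<and> fst (cs ! k) \<in> A (iss ! k) \<and> Dec (cs ! k) (fst (cs ! k)) (Tf k) \<and>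
      (\<forall>(b, e)\<in>set (Tf k). b \<in> A (iss ! k) \<and> e \<in> A (iss ! k)) \<and> P2 (fst (cs ! k)) (Tf k) \<and> P3 (fst (cs ! k)) (Tf k)"
    by metis
  define ds where "ds = map (\<lambda>k. (iss ! k, fst (cs ! k), Tf k)) [0..<n]"
  have lds: "length ds = n" by (simp add: ds_def)
  have dsk: "ds ! k = (iss ! k, fst (cs ! k), Tf k)" if "k < n" for k using that by (simp add: ds_def)
  have zs: "zsOf ds = map (\<lambda>k. (iss ! k, fst (cs ! k))) [0..<n]" by (simp add: ds_def zsOf_def)
  have mfz: "map fst (zsOf ds) = iss" unfolding zs using len n_def by (intro nth_equalityI) auto
  have msz: "map snd (zsOf ds) = map fst cs" unfolding zs n_def by (intro nth_equalityI) auto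
  have zsk: "zsOf ds ! k = (iss ! k, fst (cs ! k))" if "k < n" for k using that zs by simp
  have altz: "altc (zsOf ds)"
    unfolding altc_def
  proof
    show "successively (\<lambda>x y. fst x \<noteq> fst y) (zsOf ds)" using alt mfz successively_map[of "(\<noteq>)" fst] by metis
    show "\<forall>(i, x)\<in>set (zsOf ds). i \<in> I \<and> x \<in> A i \<and> \<phi> x = 0"
      unfolding zs using Tf mem sub len n_def by (auto dest: nth_mem)
  qed
  have okd: "\<forall>d\<in>set ds. okD d" unfolding ds_def okD_def using Tf by auto
  have la: "list_all2 (\<lambda>c d. c \<in> Bw \<and> Dec c (fst (snd d)) (snd (snd d))) cs ds"
    unfolding list_all2_conv_all_nth using lds n_def Tf dsk by auto
  have G: "Dec (foldr bm cs pp) (fst (foldD ds)) (snd (foldD ds))" using glue[OF la] by blast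
  have nz: "n \<noteq> 0" using ne len n_def by simp
  have part1: "\<phi> (fst (mprod bm pp cs)) = 0"
  proof -
    have "fst (mprod bm pp cs) = pr (zsOf ds)" by (simp add: mprod_def fst_foldr msz)
    moreover have "zsOf ds \<noteq> []" using nz lds by (cases ds) auto
    ultimately show ?thesis using F1[OF altz] by simp
  qed
  have "Psi (mprod bm pp cs) = (\<Sum>k<length ds. psiT (snd (snd (ds ! k))) * \<phi> (pr (take k (zsOf ds)) * pr (drop (Suc k) (zsOf ds))))"
    using Psi_Dec[OF G] main_val[OF okd altz] by (simp add: mprod_def)
  also have "\<dots> = (\<Sum>k<length (zsOf ds). psiT (Tf k) * \<phi> (pr (take k (zsOf ds)) * pr (drop (Suc k) (zsOf ds))))"
    by (rule sum.cong) (auto simp: lds dsk)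
  also have "\<dots> = (if odd n \<and> (\<forall>k<n. iss ! k = iss ! (n - 1 - k))
      then (\<Prod>k<n div 2. \<phi> (fst (bm (cs ! k) (cs ! (n - 1 - k))))) * Psi (cs ! (n div 2)) else 0)"
  proof -
    have hn: "n div 2 < n" using nz by simp
    have D: "Dec (cs ! (n div 2)) (fst (cs ! (n div 2))) (Tf (n div 2))" using Tf[OF hn] by blast
    have z: "\<phi> (fst (cs ! (n div 2))) = 0" using mem hn len n_def by auto
    have psi: "psiT (Tf (n div 2)) = Psi (cs ! (n div 2))"
      using Psi_Dec[OF D] z by (simp add: psiT_def)
    have pr: "(\<Prod>k<n div 2. \<phi> (snd (zsOf ds ! k) * snd (zsOf ds ! (n - 1 - k)))) =
        (\<Prod>k<n div 2. \<phi> (fst (bm (cs ! k) (cs ! (n - 1 - k)))))"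
      by (rule prod.cong) (auto simp: zsk bmult_def)
    have pal: "(\<forall>k<n. fst (zsOf ds ! k) = fst (zsOf ds ! (n - 1 - k))) = (\<forall>k<n. iss ! k = iss ! (n - 1 - k))"
    proof (rule all_cong1, rule imp_cong[OF refl])
      fix k assume k: "k < n"
      then have "n - 1 - k < n" by arith
      then show "(fst (zsOf ds ! k) = fst (zsOf ds ! (n - 1 - k))) = (iss ! k = iss ! (n - 1 - k))"
        using k by (simp add: zsk)
    qed
    note FC = final_comb[OF altz, of "\<lambda>k. psiT (Tf k)", unfolded length_zsOf lds pal pr psi]
    show ?thesis unfolding length_zsOf lds using FC .
  qed
  finally have P: "Psi (mprod bm pp cs) = (if odd n \<and> (\<forall>k<n. iss ! k = iss ! (n - 1 - k))
      then (\<Prod>k<n div 2. \<phi> (fst (bm (cs ! k) (cs ! (n - 1 - k))))) * Psi (cs ! (n div 2)) else 0)" .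
  show ?thesis using conjI[OF part1 P] unfolding n_def .
qed

end

theorem proposition5p3:
  fixes sA :: "complex \<Rightarrow> 'a::ring_1 \<Rightarrow> 'a" and \<phi> :: "'a \<Rightarrow> complex"
    and sF :: "complex \<Rightarrow> 'f::ring \<Rightarrow> 'f"
    and lm :: "'a \<Rightarrow> 'f \<Rightarrow> 'f" and rm :: "'f \<Rightarrow> 'a \<Rightarrow> 'f"
    and \<Phi> :: "'f \<Rightarrow> complex" and q :: 'f
    and I :: "'i set" and A :: "'i \<Rightarrow> 'a set"
  assumes ncps: "ncps_typeB' sA \<phi> sF lm rm \<Phi>"
    and q_idem: "q * q = q"
    and q_norm: "\<Phi> q = 1"
    and q_cai: "cyc_antimon_indep \<phi> lm rm \<Phi> q"
    and subalg: "\<forall>i\<in>I. unital_subalg sA (A i)"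
    and free: "free_family \<phi> I A"
  shows "let p = ((1::'a), - q);
             mult = bmult lm rm;
             \<psi> = (\<lambda>x::'a \<times> 'f. \<phi> (fst x));
             \<psi>' = (\<lambda>x::'a \<times> 'f. \<phi> (fst x) + \<Phi> (snd x))
         in inf_free mult p \<psi> \<psi>' I
              (\<lambda>i. gen_alg bplus (bscale sA sF) mult p
                      {mult (mult p (a, 0)) p | a. a \<in> A i})"
proof -
  interpret F: Fset sA \<phi> sF lm rm \<Phi> q I A
    using assms by (simp add: Fset_def Bset_def Fset_axioms_def)
  show ?thesis
    unfolding Let_def inf_free_def
  proof (intro allI impI)
    fix iss :: "'i list" and cs :: "('a \<times> 'f) list"
    assume H: "iss \<noteq> [] \<and> length cs = length iss \<and> set iss \<subseteq> I \<and> successively (\<noteq>) iss \<and>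
      (\<forall>k<length iss. cs ! k \<in> gen_alg bplus (bscale sA sF) (bmult lm rm) (1, - q)
            {bmult lm rm (bmult lm rm (1, - q) (a, 0)) (1, - q) |a. a \<in> A (iss ! k)} \<and>
        \<phi> (fst (cs ! k)) = 0)"
    have M: "\<phi> (fst (mprod F.bm F.pp cs)) = 0 \<and>
      F.Psi (mprod F.bm F.pp cs) = (if odd (length cs) \<and> (\<forall>k<length cs. iss ! k = iss ! (length cs - 1 - k))
        then (\<Prod>k<length cs div 2. \<phi> (fst (F.bm (cs ! k) (cs ! (length cs - 1 - k))))) * F.Psi (cs ! (length cs div 2))
        else 0)"
      by (rule F.main[OF H[THEN conjunct1] H[THEN conjunct2, THEN conjunct1]
          H[THEN conjunct2, THEN conjunct2, THEN conjunct1] H[THEN conjunct2, THEN conjunct2, THEN conjunct2, THEN conjunct1]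
          H[THEN conjunct2, THEN conjunct2, THEN conjunct2, THEN conjunct2]])
    show "\<phi> (fst (mprod (bmult lm rm) (1, - q) cs)) = 0 \<and>
       \<phi> (fst (mprod (bmult lm rm) (1, - q) cs)) + \<Phi> (snd (mprod (bmult lm rm) (1, - q) cs)) =
       (if odd (length cs) \<and> (\<forall>k<length cs. iss ! k = iss ! (length cs - 1 - k))
        then (\<Prod>k<length cs div 2. \<phi> (fst (bmult lm rm (cs ! k) (cs ! (length cs - 1 - k))))) *
             (\<phi> (fst (cs ! (length cs div 2))) + \<Phi> (snd (cs ! (length cs div 2))))
        else 0)"
      using M unfolding F.Psi_def .
  qed
qed

end
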